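(* Let $n\ge2$ and let $L_2$ and $T_2$ denote the partial maxima BLUE and BLIE of $\theta_2$, and $\mathbf{m},\mathbf{S},\mathbf{D}$ as in the context. (i) There exists a constant $a=a_n(F)$ with $0<a<1$, depending only on $n$ and $F$ (not on $\theta_1,\theta_2$), such that $T_2=aL_2$; it is given by $a=\mathbf{m}'\mathbf{D}^{-1}\mathbf{m}=\mathbf{m}'\mathbf{S}^{-1}\mathbf{m}/(1+\mathbf{m}'\mathbf{S}^{-1}\mathbf{m})$. (ii) If either $n=2$ or $F$ is such that $\operatorname{Cov}[Z_i,Z_j]\le0$ for all $i\ne j$, $i,j=1,\dots,n-1$, then the partial maxima BLUE (and BLIE) of $\theta_2$ is non-negative.
   Context: $F$ is a known, parameter-free, non-degenerate distribution function on $\mathbb{R}$ with finite variance. For unknown $\theta_1\in\mathbb{R}$, $\theta_2>0$, $X_1^*,\dots,X_n^*$ are i.i.d. with distribution function $F((x-\theta_1)/\theta_2)$ and $X^*_{j:j}=\max\{X_1^*,\dots,X_j^*\}$; $X_1,\dots,X_n$ are i.i.d. from $F$ and $X_{j:j}=\max\{X_1,\dots,X_j\}$. Spacings: $Z_i=X_{i+1:i+1}-X_{i:i}$, $i=1,\dots,n-1$, $\mathbf{Z}=(Z_1,\dots,Z_{n-1})'$, $\mathbf{m}=\mathbb{E}[\mathbf{Z}]$, $\mathbf{S}$ the covariance matrix of $\mathbf{Z}$, $\mathbf{D}=\mathbb{E}[\mathbf{Z}\mathbf{Z}']$. Linear estimators are $\mathbf{c}'\mathbf{X}^*=\sum_i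 c_iX^*_{i:i}$ with constant $c_i$. BLUE of $\theta_2$: the linear estimator unbiased for $\theta_2$ for all $(\theta_1,\theta_2)$ with minimum variance. A linear statistic $L$ is invariant for $\theta_2$ if $L(b\mathbf{X}^*+a\mathbf{1})=bL(\mathbf{X}^* )$ for all $a\in\mathbb{R}$, $b>0$; BLIE of $\theta_2$: the invariant linear statistic minimizing $\mathbb{E}[L-\theta_2]^2$. *)

theory Defs
  imports "HOL-Probability.Probability" "Jordan_Normal_Form.Matrix"
begin

text \<open>The standard sample X_1,...,X_n i.i.d. from F (= law M) is modelled by the
  product measure on functions omega with omega k = X_(k+1) for k < n.\<close>
definition pm_sample :: "nat \<Rightarrow> real measure \<Rightarrow> (nat \<Rightarrow> real) measure" where
  "pm_sample n M = PiM {..<n} (\<lambda>_. M)"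

definition pmax :: "(nat \<Rightarrow> real) \<Rightarrow> nat \<Rightarrow> real" where
  "pmax x j = Max (x ` {..<j})"

text \<open>Linear estimator c'X* = sum_{i=1}^n c_i X*_{i:i}, where X*_k = theta1 + theta2 X_k
  (so X* has distribution function F((x - theta1)/theta2)).\<close>
definition lin_est :: "nat \<Rightarrow> (nat \<Rightarrow> real) \<Rightarrow> real \<Rightarrow> real \<Rightarrow> (nat \<Rightarrow> real) \<Rightarrow> real" where
  "lin_est n c \<theta>1 \<theta>2 \<omega> = (\<Sum>i=1..n. c i * pmax (\<lambda>k. \<theta>1 + \<theta>2 * \<omega> k) i)"

definition unbiased_scale :: "nat \<Rightarrow> real measure \<Rightarrow> (nat \<Rightarrow> real) \<Rightarrow> bool" where
  "unbiased_scale n M c \<longleftrightarrow>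
     (\<forall>\<theta>1 \<theta>2. \<theta>2 > 0 \<longrightarrow> (\<integral>\<omega>. lin_est n c \<theta>1 \<theta>2 \<omega> \<partial>pm_sample n M) = \<theta>2)"

definition est_var :: "nat \<Rightarrow> real measure \<Rightarrow> (nat \<Rightarrow> real) \<Rightarrow> real \<Rightarrow> real \<Rightarrow> real" where
  "est_var n M c \<theta>1 \<theta>2 =
     (\<integral>\<omega>. (lin_est n c \<theta>1 \<theta>2 \<omega> - (\<integral>\<omega>'. lin_est n c \<theta>1 \<theta>2 \<omega>' \<partial>pm_sample n M))\<^sup>2 \<partial>pm_sample n M)"

definition is_BLUE :: "nat \<Rightarrow> real measure \<Rightarrow> (nat \<Rightarrow> real) \<Rightarrow> bool" where
  "is_BLUE n M c \<longleftrightarrow> unbiased_scale n M c \<and>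
     (\<forall>c'. unbiased_scale n M c' \<longrightarrow>
        (\<forall>\<theta>1 \<theta>2. \<theta>2 > 0 \<longrightarrow> est_var n M c \<theta>1 \<theta>2 \<le> est_var n M c' \<theta>1 \<theta>2))"

definition invariant_scale :: "nat \<Rightarrow> (nat \<Rightarrow> real) \<Rightarrow> bool" where
  "invariant_scale n c \<longleftrightarrow>
     (\<forall>y a b. b > 0 \<longrightarrow> (\<Sum>i=1..n. c i * (b * y i + a)) = b * (\<Sum>i=1..n. c i * y i))"

definition est_mse :: "nat \<Rightarrow> real measure \<Rightarrow> (nat \<Rightarrow> real) \<Rightarrow> real \<Rightarrow> real \<Rightarrow> real" where
  "est_mse n M c \<theta>1 \<theta>2 = (\<integral>\<omega>. (lin_est n c \<theta>1 \<theta>2 \<omega> - \<theta>2)\<^sup>2 \<partial>pm_sample n M)"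

definition is_BLIE :: "nat \<Rightarrow> real measure \<Rightarrow> (nat \<Rightarrow> real) \<Rightarrow> bool" where
  "is_BLIE n M c \<longleftrightarrow> invariant_scale n c \<and>
     (\<forall>c'. invariant_scale n c' \<longrightarrow>
        (\<forall>\<theta>1 \<theta>2. \<theta>2 > 0 \<longrightarrow> est_mse n M c \<theta>1 \<theta>2 \<le> est_mse n M c' \<theta>1 \<theta>2))"

definition spacing :: "nat \<Rightarrow> (nat \<Rightarrow> real) \<Rightarrow> real" where
  "spacing i \<omega> = pmax \<omega> (Suc i) - pmax \<omega> i"

definition spacing_mean :: "nat \<Rightarrow> real measure \<Rightarrow> nat \<Rightarrow> real" where
  "spacing_mean n M i = (\<integral>\<omega>. spacing i \<omega> \<partial>pm_sample n M)"

definition spacing_cov :: "nat \<Rightarrow> real measure \<Rightarrow> nat \<Rightarrow> nat \<Rightarrow> real" where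
  "spacing_cov n M i j =
     (\<integral>\<omega>. (spacing i \<omega> - spacing_mean n M i) * (spacing j \<omega> - spacing_mean n M j) \<partial>pm_sample n M)"

definition spacing_moment :: "nat \<Rightarrow> real measure \<Rightarrow> nat \<Rightarrow> nat \<Rightarrow> real" where
  "spacing_moment n M i j = (\<integral>\<omega>. spacing i \<omega> * spacing j \<omega> \<partial>pm_sample n M)"

text \<open>m = E[Z], S = Cov(Z), D = E[Z Z'] as (n-1)-vectors/matrices (0-based entries:
  entry i corresponds to Z_(i+1)).\<close>
definition m_vec :: "nat \<Rightarrow> real measure \<Rightarrow> real vec" where
  "m_vec n M = vec (n - 1) (\<lambda>i. spacing_mean n M (Suc i))"

definition S_mat :: "nat \<Rightarrow> real measure \<Rightarrow> real mat" where
  "S_mat n M = mat (n - 1) (n - 1) (\<lambda>(i, j). spacing_cov n M (Suc i) (Suc j))"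

definition D_mat :: "nat \<Rightarrow> real measure \<Rightarrow> real mat" where
  "D_mat n M = mat (n - 1) (n - 1) (\<lambda>(i, j). spacing_moment n M (Suc i) (Suc j))"

text \<open>Matrix inverse (meaningful for invertible square matrices).\<close>
definition mat_inv :: "real mat \<Rightarrow> real mat" where
  "mat_inv A = (SOME B. inverts_mat A B \<and> inverts_mat B A)"

end

theory Submission imports Defs "Jordan_Normal_Form.Determinant" begin

definition L2 :: "'a measure \<Rightarrow> ('a \<Rightarrow> real) \<Rightarrow> bool" where
  "L2 N f \<longleftrightarrow> f \<in> borel_measurable N \<and> integrable N (\<lambda>x. (f x)\<^sup>2)"

lemma abs_mult_le_sq: "\<bar>a * b\<bar> \<le> a\<^sup>2 + (b::real)\<^sup>2"
proof -
  have "2 * \<bar>a\<bar> * \<bar>b\<bar> \<le> \<bar>a\<bar>\<^sup>2 + \<bar>b\<bar>\<^sup>2" by (rule sum_squares_bound)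
  moreover have "\<bar>a * b\<bar> \<le> 2 * \<bar>a\<bar> * \<bar>b\<bar>" by (simp add: abs_mult)
  ultimately show ?thesis by simp
qed

lemma L2_mult_int: assumes "L2 N f" "L2 N g" shows "integrable N (\<lambda>x. f x * g x)"
proof (rule Bochner_Integration.integrable_bound[where f="\<lambda>x. (f x)\<^sup>2 + (g x)\<^sup>2"])
  show "integrable N (\<lambda>x. (f x)\<^sup>2 + (g x)\<^sup>2)" using assms by (auto simp: L2_def)
  show "(\<lambda>x. f x * g x) \<in> borel_measurable N" using assms by (auto simp: L2_def)
  show "AE x in N. norm (f x * g x) \<le> norm ((f x)\<^sup>2 + (g x)\<^sup>2)"
    using abs_mult_le_sq by (auto intro!: AE_I2)
qed

lemma L2_add: assumes "L2 N f" "L2 N g" shows "L2 N (\<lambda>x. f x + g x)"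
proof -
  have "integrable N (\<lambda>x. (f x)\<^sup>2 + (g x)\<^sup>2 + 2 * (f x * g x))"
    using assms L2_mult_int[OF assms] by (auto simp: L2_def)
  then have "integrable N (\<lambda>x. (f x + g x)\<^sup>2)"
    by (simp add: power2_sum algebra_simps)
  then show ?thesis using assms by (auto simp: L2_def)
qed

lemma L2_cmult: assumes "L2 N f" shows "L2 N (\<lambda>x. c * f x)"
proof -
  have m: "f \<in> borel_measurable N" and i: "integrable N (\<lambda>x. (f x)\<^sup>2)" using assms by (simp_all add: L2_def)
  have "integrable N (\<lambda>x. c\<^sup>2 * (f x)\<^sup>2)" by (rule integrable_mult_right[OF i])
  then have "integrable N (\<lambda>x. (c * f x)\<^sup>2)" by (simp add: power_mult_distrib)
  moreover have "(\<lambda>x. c * f x) \<in> borel_measurable N" by (intro borel_measurable_times measurable_const m) simp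
  ultimately show ?thesis by (simp add: L2_def)
qed

lemma L2_const: assumes "finite_measure N" shows "L2 N (\<lambda>x. c)"
  unfolding L2_def using finite_measure.integrable_const[OF assms] by simp

lemma L2_diff: assumes "L2 N f" "L2 N g" shows "L2 N (\<lambda>x. f x - g x)"
  using L2_add[OF assms(1) L2_cmult[OF assms(2), of "-1"]] by simp

lemma L2_sum: assumes "finite I" "\<And>i. i \<in> I \<Longrightarrow> L2 N (f i)" "finite_measure N"
  shows "L2 N (\<lambda>x. \<Sum>i\<in>I. f i x)"
  using assms
proof (induction I rule: finite_induct)
  case empty then show ?case using L2_const[OF empty.prems(2), of 0] by simp
next
  case (insert a A)
  have 1: "L2 N (f a)" using insert.prems(1) by simp
  have 2: "L2 N (\<lambda>x. \<Sum>i\<in>A. f i x)" using insert.IH insert.prems by simp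
  have "L2 N (\<lambda>x. f a x + (\<Sum>i\<in>A. f i x))" by (rule L2_add[OF 1 2])
  then show ?case using insert.hyps by simp
qed

lemma L2_int: assumes "L2 N f" "finite_measure N" shows "integrable N f"
proof -
  have "f \<in> borel_measurable N" "integrable N (\<lambda>x. (f x)\<^sup>2)" using assms(1) unfolding L2_def by auto
  then show ?thesis by (rule finite_measure.square_integrable_imp_integrable[OF assms(2)])
qed

locale pmx = real_distribution M for M :: "real measure" +
  fixes n :: nat
  assumes fv: "integrable M (\<lambda>x. x\<^sup>2)"
    and nd: "\<forall>c. measure M {c} \<noteq> 1"
    and n2: "n \<ge> 2"
begin

abbreviation "P \<equiv> pm_sample n M"
abbreviation "N \<equiv> n - 1"

lemma probP: "prob_space P"
  unfolding pm_sample_def by (rule prob_space_PiM) (rule prob_space_axioms)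

lemma finP: "finite_measure P"
  using probP by (simp add: prob_space_def)

lemma comp_meas: "k < n \<Longrightarrow> (\<lambda>\<omega>. \<omega> k) \<in> borel_measurable P"
proof -
  assume k: "k < n"
  have "(\<lambda>\<omega>. \<omega> k) \<in> measurable P M"
    unfolding pm_sample_def using k by (intro measurable_component_singleton) simp
  then show ?thesis using measurable_cong_sets[OF refl events_eq_borel] by blast
qed

lemma comp_L2: "k < n \<Longrightarrow> L2 P (\<lambda>\<omega>. \<omega> k)"
proof -
  assume k: "k < n"
  have d: "distr P M (\<lambda>\<omega>. \<omega> k) = M"
    unfolding pm_sample_def using k by (intro distr_PiM_component prob_space_axioms) simp
  have m: "(\<lambda>\<omega>. \<omega> k) \<in> measurable P M"
    unfolding pm_sample_def using k by (intro measurable_component_singleton) simp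
  have "integrable (distr P M (\<lambda>\<omega>. \<omega> k)) (\<lambda>x. x\<^sup>2)" using d fv by simp
  then have "integrable P (\<lambda>\<omega>. (\<omega> k)\<^sup>2)"
    by (subst (asm) integrable_distr_eq[OF m]) simp_all
  then show ?thesis using comp_meas[OF k] by (simp add: L2_def)
qed

lemma pmax_meas: "i \<le> n \<Longrightarrow> (\<lambda>\<omega>. pmax \<omega> i) \<in> borel_measurable P"
proof -
  assume i: "i \<le> n"
  have "(\<lambda>\<omega>. Max ((\<lambda>k. \<omega> k) ` {..<i})) \<in> borel_measurable P"
    by (rule borel_measurable_Max) (use i comp_meas in auto)
  then show ?thesis by (simp add: pmax_def)
qed

lemma pmax_in: "1 \<le> i \<Longrightarrow> \<exists>k<i. pmax \<omega> i = \<omega> k"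
proof -
  assume "1 \<le> i"
  then have "0 \<in> {..<i}" by simp
  then have "pmax \<omega> i \<in> \<omega> ` {..<i}" unfolding pmax_def by (intro Max_in) auto
  then show ?thesis by auto
qed

lemma pmax_L2: "1 \<le> i \<Longrightarrow> i \<le> n \<Longrightarrow> L2 P (\<lambda>\<omega>. pmax \<omega> i)"
proof -
  assume i: "1 \<le> i" "i \<le> n"
  have ik: "integrable P (\<lambda>\<omega>. (\<omega> k)\<^sup>2)" if "k \<in> {..<i}" for k
  proof -
    have "L2 P (\<lambda>\<omega>. \<omega> k)" using comp_L2 i that by simp
    then show ?thesis by (simp add: L2_def)
  qed
  have int: "integrable P (\<lambda>\<omega>. \<Sum>k<i. (\<omega> k)\<^sup>2)"
    by (rule Bochner_Integration.integrable_sum) (rule ik)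
  have "integrable P (\<lambda>\<omega>. (pmax \<omega> i)\<^sup>2)"
  proof (rule Bochner_Integration.integrable_bound[OF int])
    show "(\<lambda>\<omega>. (pmax \<omega> i)\<^sup>2) \<in> borel_measurable P" using pmax_meas[OF i(2)] by simp
    show "AE \<omega> in P. norm ((pmax \<omega> i)\<^sup>2) \<le> norm (\<Sum>k<i. (\<omega> k)\<^sup>2)"
    proof (rule AE_I2)
      fix \<omega>
      obtain k where k: "k < i" "pmax \<omega> i = \<omega> k" using pmax_in[OF i(1)] by blast
      have "(\<omega> k)\<^sup>2 \<le> (\<Sum>k<i. (\<omega> k)\<^sup>2)"
        by (rule member_le_sum) (use k in auto)
      moreover have "0 \<le> (\<Sum>k<i. (\<omega> k)\<^sup>2)" by (intro sum_nonneg) auto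
      ultimately show "norm ((pmax \<omega> i)\<^sup>2) \<le> norm (\<Sum>k<i. (\<omega> k)\<^sup>2)" using k by simp
    qed
  qed
  then show ?thesis using pmax_meas[OF i(2)] by (simp add: L2_def)
qed

lemma Z_L2: "j < N \<Longrightarrow> L2 P (spacing (Suc j))"
proof -
  assume j: "j < N"
  have "L2 P (\<lambda>\<omega>. pmax \<omega> (Suc (Suc j)) - pmax \<omega> (Suc j))"
    by (rule L2_diff; rule pmax_L2) (use j in auto)
  then show ?thesis by (simp add: spacing_def[abs_def])
qed

lemma Z_nonneg: "1 \<le> i \<Longrightarrow> 0 \<le> spacing i \<omega>"
proof -
  assume i: "1 \<le> i"
  then have "0 \<in> {..<i}" by simp
  then have "Max (\<omega> ` {..<i}) \<le> Max (\<omega> ` {..<Suc i})"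
    by (intro Max_mono) auto
  then show ?thesis unfolding spacing_def pmax_def by simp
qed

end


lemma integral_double_sum:
  fixes f :: "nat \<Rightarrow> 'a \<Rightarrow> real"
  assumes I: "finite I" and int: "\<And>i j. i \<in> I \<Longrightarrow> j \<in> I \<Longrightarrow> integrable N' (\<lambda>\<omega>. f i \<omega> * f j \<omega>)"
  shows "(\<Sum>i\<in>I. a i * (\<Sum>j\<in>I. (\<integral>\<omega>. f i \<omega> * f j \<omega> \<partial>N') * b j))
       = (\<integral>\<omega>. (\<Sum>i\<in>I. a i * f i \<omega>) * (\<Sum>j\<in>I. b j * f j \<omega>) \<partial>N')"
proof -
  have eq: "(\<Sum>i\<in>I. a i * f i \<omega>) * (\<Sum>j\<in>I. b j * f j \<omega>)
          = (\<Sum>i\<in>I. \<Sum>j\<in>I. a i * b j * (f i \<omega> * f j \<omega>))" for \<omega>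
    by (simp add: sum_product algebra_simps)
  have inti: "integrable N' (\<lambda>\<omega>. \<Sum>j\<in>I. a i * b j * (f i \<omega> * f j \<omega>))" if i: "i \<in> I" for i
  proof (rule Bochner_Integration.integrable_sum)
    fix j assume "j \<in> I"
    then show "integrable N' (\<lambda>\<omega>. a i * b j * (f i \<omega> * f j \<omega>))"
      using int[OF i] by (intro integrable_mult_right) simp
  qed
  have "(\<integral>\<omega>. (\<Sum>i\<in>I. a i * f i \<omega>) * (\<Sum>j\<in>I. b j * f j \<omega>) \<partial>N')
      = (\<integral>\<omega>. (\<Sum>i\<in>I. \<Sum>j\<in>I. a i * b j * (f i \<omega> * f j \<omega>)) \<partial>N')"
    by (simp only: eq)
  also have "\<dots> = (\<Sum>i\<in>I. (\<integral>\<omega>. (\<Sum>j\<in>I. a i * b j * (f i \<omega> * f j \<omega>)) \<partial>N'))"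
    by (rule Bochner_Integration.integral_sum) (rule inti)
  also have "\<dots> = (\<Sum>i\<in>I. \<Sum>j\<in>I. (\<integral>\<omega>. a i * b j * (f i \<omega> * f j \<omega>) \<partial>N'))"
  proof (rule sum.cong[OF refl])
    fix i assume i: "i \<in> I"
    show "(\<integral>\<omega>. (\<Sum>j\<in>I. a i * b j * (f i \<omega> * f j \<omega>)) \<partial>N')
        = (\<Sum>j\<in>I. (\<integral>\<omega>. a i * b j * (f i \<omega> * f j \<omega>) \<partial>N'))"
      by (rule Bochner_Integration.integral_sum) (use int[OF i] in \<open>intro integrable_mult_right\<close>)
  qed
  also have "\<dots> = (\<Sum>i\<in>I. \<Sum>j\<in>I. a i * b j * (\<integral>\<omega>. f i \<omega> * f j \<omega> \<partial>N'))"
    by (simp only: integral_mult_right_zero)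
  also have "\<dots> = (\<Sum>i\<in>I. a i * (\<Sum>j\<in>I. (\<integral>\<omega>. f i \<omega> * f j \<omega> \<partial>N') * b j))"
    by (simp add: sum_distrib_left algebra_simps)
  finally show ?thesis by simp
qed

definition BF :: "nat \<Rightarrow> (nat \<Rightarrow> nat \<Rightarrow> real) \<Rightarrow> (nat \<Rightarrow> real) \<Rightarrow> (nat \<Rightarrow> real) \<Rightarrow> real" where
  "BF N' K a b = (\<Sum>i<N'. a i * (\<Sum>j<N'. K i j * b j))"

context pmx begin

definition mu :: "nat \<Rightarrow> real" where "mu j = spacing_mean n M (Suc j)"
definition Zc :: "nat \<Rightarrow> (nat \<Rightarrow> real) \<Rightarrow> real" where "Zc j \<omega> = spacing (Suc j) \<omega> - mu j"
definition Q :: "(nat \<Rightarrow> real) \<Rightarrow> (nat \<Rightarrow> real) \<Rightarrow> real" where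
  "Q t \<omega> = (\<Sum>j<N. t j * spacing (Suc j) \<omega>)"
definition Sf :: "nat \<Rightarrow> nat \<Rightarrow> real" where "Sf i j = spacing_cov n M (Suc i) (Suc j)"
definition Df :: "nat \<Rightarrow> nat \<Rightarrow> real" where "Df i j = spacing_moment n M (Suc i) (Suc j)"

lemma int1: "measure P (space P) = 1"
  using prob_space.prob_space[OF probP] by simp

lemma Zc_L2: "j < N \<Longrightarrow> L2 P (Zc j)"
proof -
  assume j: "j < N"
  have "L2 P (\<lambda>\<omega>. spacing (Suc j) \<omega> - mu j)"
    by (rule L2_diff[OF Z_L2[OF j] L2_const[OF finP]])
  then show ?thesis by (simp add: Zc_def[abs_def])
qed

lemma Q_L2: "L2 P (Q t)"
proof -
  have "L2 P (\<lambda>\<omega>. \<Sum>j<N. t j * spacing (Suc j) \<omega>)"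
    by (rule L2_sum[OF _ _ finP]) (auto intro!: L2_cmult Z_L2)
  then show ?thesis by (simp add: Q_def[abs_def])
qed

lemma EQ: "(\<integral>\<omega>. Q t \<omega> \<partial>P) = (\<Sum>j<N. t j * mu j)"
proof -
  have "(\<integral>\<omega>. Q t \<omega> \<partial>P) = (\<Sum>j<N. (\<integral>\<omega>. t j * spacing (Suc j) \<omega> \<partial>P))"
    unfolding Q_def by (rule Bochner_Integration.integral_sum)
       (auto intro!: integrable_mult_right L2_int[OF Z_L2 finP])
  also have "\<dots> = (\<Sum>j<N. t j * mu j)"
    by (simp only: integral_mult_right_zero mu_def spacing_mean_def)
  finally show ?thesis .
qed

lemma Qc: "(\<Sum>j<N. t j * Zc j \<omega>) = Q t \<omega> - (\<Sum>j<N. t j * mu j)"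
  by (simp add: Zc_def Q_def right_diff_distrib sum_subtractf)

lemma BS_int: "BF N Sf a b = (\<integral>\<omega>. (\<Sum>i<N. a i * Zc i \<omega>) * (\<Sum>j<N. b j * Zc j \<omega>) \<partial>P)"
proof -
  have "Sf i j = (\<integral>\<omega>. Zc i \<omega> * Zc j \<omega> \<partial>P)" for i j
    by (simp add: Sf_def spacing_cov_def Zc_def mu_def)
  then have "BF N Sf a b = (\<Sum>i<N. a i * (\<Sum>j<N. (\<integral>\<omega>. Zc i \<omega> * Zc j \<omega> \<partial>P) * b j))"
    by (simp add: BF_def)
  also have "\<dots> = (\<integral>\<omega>. (\<Sum>i<N. a i * Zc i \<omega>) * (\<Sum>j<N. b j * Zc j \<omega>) \<partial>P)"
    by (rule integral_double_sum) (auto intro!: L2_mult_int Zc_L2)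
  finally show ?thesis .
qed

lemma BD_int: "BF N Df a b = (\<integral>\<omega>. Q a \<omega> * Q b \<omega> \<partial>P)"
proof -
  have "Df i j = (\<integral>\<omega>. spacing (Suc i) \<omega> * spacing (Suc j) \<omega> \<partial>P)" for i j
    by (simp add: Df_def spacing_moment_def)
  then have "BF N Df a b = (\<Sum>i<N. a i * (\<Sum>j<N. (\<integral>\<omega>. spacing (Suc i) \<omega> * spacing (Suc j) \<omega> \<partial>P) * b j))"
    by (simp add: BF_def)
  also have "\<dots> = (\<integral>\<omega>. (\<Sum>i<N. a i * spacing (Suc i) \<omega>) * (\<Sum>j<N. b j * spacing (Suc j) \<omega>) \<partial>P)"
    by (rule integral_double_sum) (auto intro!: L2_mult_int Z_L2)
  finally show ?thesis by (simp add: Q_def)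
qed

lemma Df_eq: "i < N \<Longrightarrow> j < N \<Longrightarrow> Df i j = Sf i j + mu i * mu j"
proof -
  assume i: "i < N" and j: "j < N"
  let ?Z = "\<lambda>k \<omega>. spacing (Suc k) \<omega>"
  have ii: "integrable P (?Z i)" "integrable P (?Z j)"
    using L2_int[OF Z_L2 finP] i j by auto
  have iZc: "integrable P (\<lambda>\<omega>. Zc i \<omega> * Zc j \<omega>)"
    by (rule L2_mult_int[OF Zc_L2[OF i] Zc_L2[OF j]])
  have eq: "(\<lambda>\<omega>. ?Z i \<omega> * ?Z j \<omega>) = (\<lambda>\<omega>. Zc i \<omega> * Zc j \<omega> + (mu j * ?Z i \<omega> + (mu i * ?Z j \<omega> - mu i * mu j)))"
    by (simp add: Zc_def fun_eq_iff algebra_simps)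
  have "Df i j = (\<integral>\<omega>. Zc i \<omega> * Zc j \<omega> + (mu j * ?Z i \<omega> + (mu i * ?Z j \<omega> - mu i * mu j)) \<partial>P)"
    unfolding Df_def spacing_moment_def eq ..
  also have "\<dots> = (\<integral>\<omega>. Zc i \<omega> * Zc j \<omega> \<partial>P) + ((\<integral>\<omega>. mu j * ?Z i \<omega> \<partial>P) + ((\<integral>\<omega>. mu i * ?Z j \<omega> \<partial>P) - (\<integral>\<omega>. mu i * mu j \<partial>P)))"
    using ii iZc by (simp add: finite_measure.integrable_const[OF finP])
  also have "\<dots> = Sf i j + (mu j * mu i + (mu i * mu j - mu i * mu j))"
    using int1 by (simp add: Sf_def spacing_cov_def Zc_def mu_def spacing_mean_def)
  finally show ?thesis by simp
qed

end


lemma AE_pick: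
  assumes "AE x in N'. Pr x" "emeasure N' {x\<in>space N'. R x} \<noteq> 0"
  shows "\<exists>x\<in>space N'. R x \<and> Pr x"
proof (rule ccontr)
  assume na: "\<not> (\<exists>x\<in>space N'. R x \<and> Pr x)"
  have "AE x in N'. Pr x \<longrightarrow> \<not> R x" by (rule AE_I2) (use na in blast)
  from AE_mp[OF assms(1) this] have "AE x in N'. \<not> R x" .
  then have "emeasure N' {x\<in>space N'. R x} = 0" by (rule emeasure_eq_0_AE)
  with assms(2) show False by simp
qed

context pmx begin

lemma id_meas: "(\<lambda>x::real. x) \<in> borel_measurable M"
proof -
  have "(\<lambda>x::real. x) \<in> borel_measurable borel" by simp
  then show ?thesis by (subst measurable_cong_sets[OF events_eq_borel refl])
qed

lemma not_point: "\<not> (AE x in M. x = c)"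
proof
  assume "AE x in M. x = c"
  then have "AE x in M. x \<in> {c}" by simp
  moreover have "{c} \<in> events" by simp
  ultimately have "prob {c} = 1" using AE_in_set_eq_1 by blast
  with nd show False by blast
qed

lemma split_point: "\<exists>u. 0 < measure M {..u} \<and> 0 < measure M {u<..}"
proof -
  define \<mu> where "\<mu> = (\<integral>x. x \<partial>M)"
  have fm: "finite_measure M" by (rule finite_measure_axioms)
  have intM: "integrable M (\<lambda>x. x)"
    by (rule finite_measure.square_integrable_imp_integrable[OF fm id_meas fv])
  have c: "measure M (space M) = 1" using prob_space by simp
  have A: "measure M {\<mu><..} \<noteq> 0"
  proof
    assume z: "measure M {\<mu><..} = 0"
    have "{\<mu><..} \<in> null_sets M"
      using z by (simp add: null_sets_def emeasure_eq_measure)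
    then have ae: "AE x in M. x \<notin> {\<mu><..}" by (rule AE_not_in)
    have nn: "AE x in M. 0 \<le> \<mu> - x" by (rule AE_mp[OF ae]) (rule AE_I2, simp)
    have ii: "integrable M (\<lambda>x. \<mu> - x)"
      using intM by (intro Bochner_Integration.integrable_diff) (auto intro: finite_measure.integrable_const[OF fm])
    have "(\<integral>x. \<mu> - x \<partial>M) = \<mu> - \<mu>"
      using intM c by (subst Bochner_Integration.integral_diff) (auto simp: \<mu>_def finite_measure.integrable_const[OF fm])
    then have "AE x in M. \<mu> - x = 0" using integral_nonneg_eq_0_iff_AE[OF ii nn] by simp
    then have "AE x in M. x = \<mu>" by (rule AE_mp) (rule AE_I2, simp)
    with not_point show False by blast
  qed
  have B: "measure M {..\<mu>} \<noteq> 0"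
  proof
    assume z: "measure M {..\<mu>} = 0"
    have "{..\<mu>} \<in> null_sets M"
      using z by (simp add: null_sets_def emeasure_eq_measure)
    then have ae: "AE x in M. x \<notin> {..\<mu>}" by (rule AE_not_in)
    have nn: "AE x in M. 0 \<le> x - \<mu>" by (rule AE_mp[OF ae]) (rule AE_I2, simp)
    have ii: "integrable M (\<lambda>x. x - \<mu>)"
      using intM by (intro Bochner_Integration.integrable_diff) (auto intro: finite_measure.integrable_const[OF fm])
    have "(\<integral>x. x - \<mu> \<partial>M) = \<mu> - \<mu>"
      using intM c by (subst Bochner_Integration.integral_diff) (auto simp: \<mu>_def finite_measure.integrable_const[OF fm])
    then have "AE x in M. x - \<mu> = 0" using integral_nonneg_eq_0_iff_AE[OF ii nn] by simp
    then have "AE x in M. x = \<mu>" by (rule AE_mp) (rule AE_I2, simp)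
    with not_point show False by blast
  qed
  have "0 < measure M {..\<mu>}" using B measure_nonneg[of M "{..\<mu>}"] by linarith
  moreover have "0 < measure M {\<mu><..}" using A measure_nonneg[of M "{\<mu><..}"] by linarith
  ultimately show ?thesis by blast
qed

lemma pmax_upd_le: "i \<le> r \<Longrightarrow> pmax (X(r:=x)) i = pmax X i"
  unfolding pmax_def by (rule arg_cong[where f=Max], rule image_cong) auto

lemma pmax_upd_Suc: "1 \<le> r \<Longrightarrow> pmax (X(r:=x)) (Suc r) = max x (pmax X r)"
proof -
  assume r: "1 \<le> r"
  have "(X(r:=x)) ` {..<Suc r} = insert x (X ` {..<r})"
  proof -
    have "(X(r:=x)) ` {..<r} = X ` {..<r}" by (rule image_cong) auto
    moreover have "(X(r:=x)) ` {..<Suc r} = insert x ((X(r:=x)) ` {..<r})"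
      by (simp only: lessThan_Suc image_insert fun_upd_same)
    ultimately show ?thesis by simp
  qed
  moreover have "0 \<in> {..<r}" using r by simp
  then have "X ` {..<r} \<noteq> {}" by blast
  ultimately show ?thesis unfolding pmax_def by (simp add: Max_insert)
qed

lemma Q_const:
  assumes ae: "AE \<omega> in P. Q t \<omega> = C"
  shows "\<forall>j<N. t j = 0"
proof (rule ccontr)
  assume nz: "\<not> (\<forall>j<N. t j = 0)"
  define K where "K = {j. j < N \<and> t j \<noteq> 0}"
  have Kfin: "finite K" unfolding K_def by simp
  have Kne: "K \<noteq> {}" using nz unfolding K_def by auto
  define k where "k = Max K"
  have kK: "k \<in> K" unfolding k_def using Kfin Kne by (rule Max_in)
  then have k: "k < N" "t k \<noteq> 0" unfolding K_def by auto
  have above: "t j = 0" if "k < j" "j < N" for j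
  proof (rule ccontr)
    assume "t j \<noteq> 0"
    then have "j \<in> K" using that unfolding K_def by auto
    then have "j \<le> k" unfolding k_def using Kfin by simp
    with that show False by simp
  qed
  define r where "r = Suc k"
  have r: "r < n" "1 \<le> r" using k unfolding r_def by auto
  define I where "I = {..<n} - {r}"
  have ins: "insert r I = {..<n}" and rI: "r \<notin> I" and finI: "finite I"
    using r unfolding I_def by auto
  have dec: "Q t (X(r:=x)) = (\<Sum>j<k. t j * spacing (Suc j) X) + t k * (max x (pmax X r) - pmax X r)"
    for X x
  proof -
    have "Q t (X(r:=x)) = (\<Sum>j<Suc k. t j * spacing (Suc j) (X(r:=x)))"
      unfolding Q_def
      by (rule sum.mono_neutral_left[symmetric]) (use k above in auto)
    also have "\<dots> = (\<Sum>j<k. t j * spacing (Suc j) (X(r:=x))) + t k * spacing (Suc k) (X(r:=x))"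
      by simp
    also have "(\<Sum>j<k. t j * spacing (Suc j) (X(r:=x))) = (\<Sum>j<k. t j * spacing (Suc j) X)"
    proof (rule sum.cong[OF refl])
      fix j assume "j \<in> {..<k}"
      then have "Suc (Suc j) \<le> r" "Suc j \<le> r" unfolding r_def by auto
      then show "t j * spacing (Suc j) (X(r:=x)) = t j * spacing (Suc j) X"
        unfolding spacing_def by (simp add: pmax_upd_le)
    qed
    also have "spacing (Suc k) (X(r:=x)) = max x (pmax X r) - pmax X r"
      unfolding spacing_def r_def[symmetric] using r by (simp add: pmax_upd_le pmax_upd_Suc)
    finally show ?thesis .
  qed
  let ?PI = "PiM I (\<lambda>_. M)"
  have probPI: "prob_space ?PI" by (rule prob_space_PiM) (rule prob_space_axioms)
  interpret pp: pair_prob_space M ?PI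
    by (intro pair_prob_space.intro pair_sigma_finite.intro prob_space_imp_sigma_finite prob_space_axioms probPI)
  have meas: "(\<lambda>z. (snd z)(r := fst z)) \<in> measurable (M \<Otimes>\<^sub>M ?PI) (PiM {..<n} (\<lambda>_. M))"
    by (rule measurable_fun_upd[where J=I]) (use ins in auto)
  have sb: "(\<lambda>(x, X). X(r := x)) = (\<lambda>z. (snd z)(r := fst z))"
    by (simp add: split_beta')
  have distr0: "distr (M \<Otimes>\<^sub>M ?PI) (PiM (insert r I) (\<lambda>_. M)) (\<lambda>(x, X). X(r := x)) = PiM (insert r I) (\<lambda>_. M)"
    by (rule distr_pair_PiM_eq_PiM) (use prob_space_axioms in auto)
  have distr: "distr (M \<Otimes>\<^sub>M ?PI) (PiM {..<n} (\<lambda>_. M)) (\<lambda>z. (snd z)(r := fst z)) = PiM {..<n} (\<lambda>_. M)"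
    using distr0 unfolding ins sb .
  have "AE \<omega> in distr (M \<Otimes>\<^sub>M ?PI) (PiM {..<n} (\<lambda>_. M)) (\<lambda>z. (snd z)(r := fst z)). Q t \<omega> = C"
    using ae unfolding distr pm_sample_def .
  from AE_distrD[OF meas this]
  have ae2: "AE z in M \<Otimes>\<^sub>M ?PI. Q t ((snd z)(r := fst z)) = C" .
  from pp.AE_pair[OF ae2]
  have ae3: "AE x in M. AE X in ?PI. Q t (X(r := x)) = C" by simp
  obtain u where u: "0 < measure M {..u}" "0 < measure M {u<..}" using split_point by blast
  have e1: "emeasure M {x\<in>space M. u < x} \<noteq> 0"
  proof -
    have "{x\<in>space M. u < x} = {u<..}" by auto
    then show ?thesis using u(2) by (simp add: emeasure_eq_measure)
  qed
  obtain x1 where x1: "u < x1" "AE X in ?PI. Q t (X(r := x1)) = C"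
    using AE_pick[OF ae3 e1] by blast
  have e2: "emeasure M {x\<in>space M. x \<noteq> x1} \<noteq> 0"
  proof -
    have s: "{x\<in>space M. x \<noteq> x1} = space M - {x1}" by auto
    have "prob (space M - {x1}) = 1 - prob {x1}" by (rule prob_compl) simp
    moreover have "prob {x1} \<noteq> 1" using nd by blast
    moreover have "prob {x1} \<le> 1" by simp
    ultimately have "0 < prob (space M - {x1})" by linarith
    then show ?thesis unfolding s by (simp add: emeasure_eq_measure)
  qed
  obtain x2 where x2: "x2 \<noteq> x1" "AE X in ?PI. Q t (X(r := x2)) = C"
    using AE_pick[OF ae3 e2] by blast
  have ae4: "AE X in ?PI. Q t (X(r := x1)) = C \<and> Q t (X(r := x2)) = C"
    using x1(2) x2(2) by (rule AE_conjI)
  have Eset: "{X\<in>space ?PI. \<forall>i<r. X i \<le> u} = prod_emb I (\<lambda>_. M) {..<r} (PiE {..<r} (\<lambda>_. {..u}))"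
    unfolding prod_emb_def space_PiM by (auto simp: PiE_iff extensional_def)
  have sub: "{..<r} \<subseteq> I" using r unfolding I_def by auto
  have "emeasure ?PI (prod_emb I (\<lambda>_. M) {..<r} (PiE {..<r} (\<lambda>_. {..u}))) = (\<Prod>i<r. emeasure M {..u})"
    by (rule emeasure_PiM_emb) (use prob_space_axioms sub in auto)
  also have "\<dots> = (\<Prod>i<r. ennreal (measure M {..u}))" by (simp add: emeasure_eq_measure)
  also have "\<dots> = ennreal (\<Prod>i<r. measure M {..u})" by (rule prod_ennreal) simp
  finally have e3: "emeasure ?PI {X\<in>space ?PI. \<forall>i<r. X i \<le> u} \<noteq> 0"
    unfolding Eset using u(1) by (simp add: prod_pos)
  obtain X where X: "\<forall>i<r. X i \<le> u" "Q t (X(r := x1)) = C" "Q t (X(r := x2)) = C"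
    using AE_pick[OF ae4 e3] by blast
  define y where "y = pmax X r"
  have yu: "y \<le> u"
  proof -
    have "0 \<in> {..<r}" using r by simp
    then have "X ` {..<r} \<noteq> {}" by blast
    then show ?thesis unfolding y_def pmax_def using X(1) by (simp add: Max_le_iff)
  qed
  have "t k * (max x1 y - y) = t k * (max x2 y - y)"
    using X(2,3) dec[of X x1] dec[of X x2] unfolding y_def by linarith
  then have "max x1 y = max x2 y" using k(2) by simp
  moreover have "max x1 y = x1" using yu x1(1) by simp
  ultimately have "max x2 y = x1" by simp
  then have "x2 = x1" using yu x1(1) by (auto simp: max_def split: if_splits)
  with x2(1) show False by simp
qed

end


lemma BF_minus_left: "BF N' K (\<lambda>i. a i - b i) c = BF N' K a c - BF N' K b c"
  by (simp add: BF_def left_diff_distrib sum_subtractf)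

lemma BF_minus_right: "BF N' K a (\<lambda>j. b j - c j) = BF N' K a b - BF N' K a c"
proof -
  have "(\<Sum>j<N'. K i j * (b j - c j)) = (\<Sum>j<N'. K i j * b j) - (\<Sum>j<N'. K i j * c j)" for i
    by (simp add: right_diff_distrib sum_subtractf)
  then show ?thesis by (simp add: BF_def right_diff_distrib sum_subtractf)
qed

lemma BF_scale_right: "BF N' K a (\<lambda>j. r * b j) = r * BF N' K a b"
proof -
  have "(\<Sum>j<N'. K i j * (r * b j)) = r * (\<Sum>j<N'. K i j * b j)" for i
    by (simp add: sum_distrib_left algebra_simps)
  then show ?thesis by (simp add: BF_def sum_distrib_left algebra_simps)
qed

lemma BF_scale_left: "BF N' K (\<lambda>i. r * a i) b = r * BF N' K a b"
  by (simp add: BF_def sum_distrib_left algebra_simps)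

lemma BF_sym: assumes "\<And>i j. K i j = K j i" shows "BF N' K a b = BF N' K b a"
proof -
  have "BF N' K a b = (\<Sum>i<N'. \<Sum>j<N'. a i * K i j * b j)"
    by (simp add: BF_def sum_distrib_left algebra_simps)
  also have "\<dots> = (\<Sum>j<N'. \<Sum>i<N'. a i * K i j * b j)" by (rule sum.swap)
  also have "\<dots> = BF N' K b a"
    by (simp add: BF_def sum_distrib_left assms algebra_simps)
  finally show ?thesis .
qed

lemma BF_apply: assumes "\<And>i. i < N' \<Longrightarrow> (\<Sum>j<N'. K i j * x j) = v i"
  shows "BF N' K a x = (\<Sum>i<N'. a i * v i)"
  unfolding BF_def by (rule sum.cong) (simp_all add: assms)

context pmx begin

lemma Sf_sym: "Sf i j = Sf j i"
  by (simp add: Sf_def spacing_cov_def mult.commute)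

lemma BS_sq: "BF N Sf a a = (\<integral>\<omega>. (\<Sum>i<N. a i * Zc i \<omega>)\<^sup>2 \<partial>P)"
  using BS_int[of a a] by (simp add: power2_eq_square)

lemma BS_nonneg: "0 \<le> BF N Sf a a"
  unfolding BS_sq by (rule integral_nonneg_AE) simp

lemma BS_zero: assumes "BF N Sf a a = 0" shows "\<forall>j<N. a j = 0"
proof -
  have L: "L2 P (\<lambda>\<omega>. \<Sum>i<N. a i * Zc i \<omega>)"
    by (rule L2_sum[OF _ _ finP]) (auto intro!: L2_cmult Zc_L2)
  then have ii: "integrable P (\<lambda>\<omega>. (\<Sum>i<N. a i * Zc i \<omega>)\<^sup>2)" by (simp add: L2_def)
  have "AE \<omega> in P. (\<Sum>i<N. a i * Zc i \<omega>)\<^sup>2 = 0"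
    using integral_nonneg_eq_0_iff_AE[OF ii] assms unfolding BS_sq by simp
  then have "AE \<omega> in P. Q a \<omega> = (\<Sum>j<N. a j * mu j)"
    by (rule AE_mp) (rule AE_I2, use Qc[of a] in simp)
  then show ?thesis by (rule Q_const)
qed

lemma mu_nonneg: "0 \<le> mu j"
  unfolding mu_def spacing_mean_def by (rule integral_nonneg_AE) (simp add: Z_nonneg)

lemma N_pos: "0 < N" using n2 by simp

lemma mu0_pos: "0 < mu 0"
proof (rule ccontr)
  assume "\<not> 0 < mu 0"
  then have z: "mu 0 = 0" using mu_nonneg[of 0] by simp
  have ii: "integrable P (spacing (Suc 0))" using L2_int[OF Z_L2 finP] N_pos by simp
  have nn: "AE \<omega> in P. 0 \<le> spacing (Suc 0) \<omega>" by (simp add: Z_nonneg)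
  have "AE \<omega> in P. spacing (Suc 0) \<omega> = 0"
    using integral_nonneg_eq_0_iff_AE[OF ii nn] z unfolding mu_def spacing_mean_def by simp
  moreover have "Q (\<lambda>j. if j = 0 then 1 else 0) \<omega> = spacing (Suc 0) \<omega>" for \<omega>
  proof -
    have "(\<Sum>j<N. (if j = 0 then 1 else 0) * spacing (Suc j) \<omega>) = (\<Sum>j<N. if j = 0 then spacing (Suc j) \<omega> else 0)"
      by (rule sum.cong) auto
    also have "\<dots> = spacing (Suc 0) \<omega>" using N_pos by (simp add: sum.delta)
    finally show ?thesis unfolding Q_def .
  qed
  ultimately have "AE \<omega> in P. Q (\<lambda>j. if j = 0 then 1 else 0) \<omega> = 0" by simp
  then have "\<forall>j<N. (if j = 0 then 1 else 0::real) = 0" by (rule Q_const)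
  then have "(if (0::nat) = 0 then 1 else 0::real) = 0" using N_pos by blast
  then show False by simp
qed

lemma BD_eq: "BF N Df a b = BF N Sf a b + (\<Sum>i<N. a i * mu i) * (\<Sum>j<N. b j * mu j)"
proof -
  have "BF N Df a b = (\<Sum>i<N. a i * ((\<Sum>j<N. Sf i j * b j) + mu i * (\<Sum>j<N. b j * mu j)))"
    unfolding BF_def
  proof (rule sum.cong[OF refl])
    fix i assume i: "i \<in> {..<N}"
    have "(\<Sum>j<N. Df i j * b j) = (\<Sum>j<N. Sf i j * b j + mu i * (b j * mu j))"
      by (rule sum.cong) (use i Df_eq in \<open>auto simp: algebra_simps\<close>)
    also have "\<dots> = (\<Sum>j<N. Sf i j * b j) + mu i * (\<Sum>j<N. b j * mu j)"
      by (simp add: sum.distrib sum_distrib_left)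
    finally show "a i * (\<Sum>j<N. Df i j * b j) = a i * ((\<Sum>j<N. Sf i j * b j) + mu i * (\<Sum>j<N. b j * mu j))"
      by simp
  qed
  also have "\<dots> = BF N Sf a b + (\<Sum>i<N. a i * mu i) * (\<Sum>j<N. b j * mu j)"
    by (simp add: BF_def distrib_left sum.distrib sum_distrib_right algebra_simps)
  finally show ?thesis .
qed

lemma Df_sym: "Df i j = Df j i"
  by (simp add: Df_def spacing_moment_def mult.commute)

lemma kerS: assumes "\<And>i. i < N \<Longrightarrow> (\<Sum>j<N. Sf i j * v j) = 0" shows "\<forall>j<N. v j = 0"
proof -
  have "BF N Sf v v = (\<Sum>i<N. v i * 0)" by (rule BF_apply) (rule assms)
  then show ?thesis using BS_zero by simp
qed

lemma kerD: assumes "\<And>i. i < N \<Longrightarrow> (\<Sum>j<N. Df i j * v j) = 0" shows "\<forall>j<N. v j = 0"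
proof -
  have "BF N Df v v = (\<Sum>i<N. v i * 0)" by (rule BF_apply) (rule assms)
  then have "BF N Sf v v + (\<Sum>i<N. v i * mu i)\<^sup>2 = 0" unfolding BD_eq by (simp add: power2_eq_square)
  moreover have "0 \<le> BF N Sf v v" by (rule BS_nonneg)
  moreover have "0 \<le> (\<Sum>i<N. v i * mu i)\<^sup>2" by simp
  ultimately have "BF N Sf v v = 0" by linarith
  then show ?thesis by (rule BS_zero)
qed

lemma Mmat:
  assumes offd: "\<And>i j. i < N \<Longrightarrow> j < N \<Longrightarrow> i \<noteq> j \<Longrightarrow> Sf i j \<le> 0"
    and sol: "\<And>i. i < N \<Longrightarrow> (\<Sum>j<N. Sf i j * x j) = mu i"
  shows "\<forall>j<N. 0 \<le> x j"
proof -
  define xp where "xp j = max (x j) 0" for j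
  define xn where "xn j = max (- x j) 0" for j
  have xeq: "x = (\<lambda>j. xp j - xn j)" by (auto simp: xp_def xn_def fun_eq_iff max_def)
  have "BF N Sf xn x = (\<Sum>i<N. xn i * mu i)" by (rule BF_apply) (rule sol)
  moreover have "0 \<le> (\<Sum>i<N. xn i * mu i)" by (intro sum_nonneg mult_nonneg_nonneg) (auto simp: xn_def mu_nonneg)
  moreover have "BF N Sf xn x = BF N Sf xn xp - BF N Sf xn xn"
    by (subst xeq) (rule BF_minus_right)
  moreover have "BF N Sf xn xp \<le> 0"
  proof -
    have "BF N Sf xn xp = (\<Sum>i<N. \<Sum>j<N. xn i * Sf i j * xp j)"
      by (simp add: BF_def sum_distrib_left algebra_simps)
    also have "\<dots> \<le> 0"
    proof (intro sum_nonpos)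
      fix i j assume i: "i \<in> {..<N}" and j: "j \<in> {..<N}"
      show "xn i * Sf i j * xp j \<le> 0"
      proof (cases "i = j")
        case True then show ?thesis by (simp add: xn_def xp_def max_def)
      next
        case False
        then have "Sf i j \<le> 0" using offd i j by simp
        moreover have "0 \<le> xn i" "0 \<le> xp j" by (simp_all add: xn_def xp_def)
        ultimately show ?thesis by (simp add: mult_nonneg_nonpos mult_nonpos_nonneg)
      qed
    qed
    finally show ?thesis .
  qed
  ultimately have "BF N Sf xn xn \<le> 0" by linarith
  then have "BF N Sf xn xn = 0" using BS_nonneg[of xn] by linarith
  then have "\<forall>j<N. xn j = 0" by (rule BS_zero)
  then show ?thesis by (auto simp: xn_def max_def split: if_splits)
qed

end


lemma sum_decomp:
  fixes c Y :: "nat \<Rightarrow> real"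
  shows "(\<Sum>i=1..Suc p. c i * Y i) = (\<Sum>i=1..Suc p. c i) * Y 1
          + (\<Sum>j<p. (\<Sum>i=j+2..Suc p. c i) * (Y (j+2) - Y (j+1)))"
proof (induction p)
  case 0 show ?case by simp
next
  case (Suc p)
  have tel: "(\<Sum>j<Suc p. Y (j+2) - Y (j+1)) = Y (Suc p + 1) - Y 1"
    using sum_lessThan_telescope[of "\<lambda>j. Y (j+1)" "Suc p"] by simp
  have inner: "(\<Sum>i=j+2..Suc (Suc p). c i) = (\<Sum>i=j+2..Suc p. c i) + c (Suc (Suc p))" if "j < Suc p" for j
    using that by (simp add: sum.cl_ivl_Suc)
  have "(\<Sum>j<Suc p. (\<Sum>i=j+2..Suc (Suc p). c i) * (Y (j+2) - Y (j+1)))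
      = (\<Sum>j<Suc p. (\<Sum>i=j+2..Suc p. c i) * (Y (j+2) - Y (j+1)) + c (Suc (Suc p)) * (Y (j+2) - Y (j+1)))"
    by (rule sum.cong) (simp_all add: inner algebra_simps)
  also have "\<dots> = (\<Sum>j<Suc p. (\<Sum>i=j+2..Suc p. c i) * (Y (j+2) - Y (j+1))) + c (Suc (Suc p)) * (Y (Suc p + 1) - Y 1)"
    by (simp only: sum.distrib sum_distrib_left[symmetric] tel)
  also have "(\<Sum>j<Suc p. (\<Sum>i=j+2..Suc p. c i) * (Y (j+2) - Y (j+1)))
      = (\<Sum>j<p. (\<Sum>i=j+2..Suc p. c i) * (Y (j+2) - Y (j+1)))"
    by simp
  finally have R: "(\<Sum>j<Suc p. (\<Sum>i=j+2..Suc (Suc p). c i) * (Y (j+2) - Y (j+1)))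
      = (\<Sum>j<p. (\<Sum>i=j+2..Suc p. c i) * (Y (j+2) - Y (j+1))) + c (Suc (Suc p)) * (Y (Suc p + 1) - Y 1)" .
  have L1: "(\<Sum>i=1..Suc (Suc p). c i * Y i) = (\<Sum>i=1..Suc p. c i * Y i) + c (Suc (Suc p)) * Y (Suc (Suc p))"
    by (simp add: sum.cl_ivl_Suc)
  have L2': "(\<Sum>i=1..Suc (Suc p). c i) = (\<Sum>i=1..Suc p. c i) + c (Suc (Suc p))"
    by (simp add: sum.cl_ivl_Suc)
  show ?case unfolding L1 L2' R Suc.IH by (simp add: algebra_simps)
qed

lemma tel_ivl: "a \<le> b \<Longrightarrow> (\<Sum>i=Suc a..b. g (i - 1) - g i) = (g a - g b :: real)"
proof (induction b)
  case 0 then show ?case by simp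
next
  case (Suc b)
  show ?case
  proof (cases "a = Suc b")
    case True then show ?thesis by simp
  next
    case False
    then have "a \<le> b" using Suc.prems by simp
    then show ?thesis using Suc.IH by (simp add: sum.cl_ivl_Suc)
  qed
qed

definition ttf :: "nat \<Rightarrow> (nat \<Rightarrow> real) \<Rightarrow> nat \<Rightarrow> real" where
  "ttf m t k = (if 1 \<le> k \<and> k < m then t (k - 1) else 0)"

definition cof :: "nat \<Rightarrow> (nat \<Rightarrow> real) \<Rightarrow> nat \<Rightarrow> real" where
  "cof m t i = ttf m t (i - 1) - ttf m t i"

definition Tc :: "nat \<Rightarrow> (nat \<Rightarrow> real) \<Rightarrow> nat \<Rightarrow> real" where
  "Tc m c j = (\<Sum>i=j+2..m. c i)"

lemma cof_sum: "(\<Sum>i=1..m. cof m t i) = 0"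
proof -
  have "(\<Sum>i=Suc 0..m. ttf m t (i - 1) - ttf m t i) = ttf m t 0 - ttf m t m"
    by (rule tel_ivl) simp
  then show ?thesis by (simp add: cof_def ttf_def)
qed

lemma Tc_cof: "j + 1 < m \<Longrightarrow> Tc m (cof m t) j = t j"
proof -
  assume j: "j + 1 < m"
  have "(\<Sum>i=Suc (j+1)..m. ttf m t (i - 1) - ttf m t i) = ttf m t (j+1) - ttf m t m"
    by (rule tel_ivl) (use j in simp)
  then show ?thesis using j by (simp add: Tc_def cof_def ttf_def)
qed

lemma pmax_affine: "1 \<le> i \<Longrightarrow> 0 < b \<Longrightarrow> pmax (\<lambda>k. a + b * \<omega> k) i = a + b * pmax \<omega> i"
proof -
  assume i: "1 \<le> i" and b: "0 < b"
  have mono: "mono (\<lambda>x::real. a + b * x)" using b by (auto simp: mono_def)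
  have "0 \<in> {..<i}" using i by simp
  then have ne: "\<omega> ` {..<i} \<noteq> {}" by blast
  have "(\<lambda>k. a + b * \<omega> k) ` {..<i} = (\<lambda>x. a + b * x) ` (\<omega> ` {..<i})" by (simp add: image_image)
  then show ?thesis unfolding pmax_def using mono_Max_commute[OF mono _ ne] by simp
qed

lemma invariant_iff: "invariant_scale m c \<longleftrightarrow> (\<Sum>i=1..m. c i) = 0"
proof
  assume "invariant_scale m c"
  then have "(\<Sum>i=1..m. c i * (1 * 0 + 1)) = 1 * (\<Sum>i=1..m. c i * (0::real))"
    using spec[OF spec[OF spec[OF \<open>invariant_scale m c\<close>[unfolded invariant_scale_def], of "\<lambda>_. 0"], of 1], of 1] by simp
  then show "(\<Sum>i=1..m. c i) = 0" by simp
next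
  assume s: "(\<Sum>i=1..m. c i) = 0"
  show "invariant_scale m c" unfolding invariant_scale_def
  proof (intro allI impI)
    fix y :: "nat \<Rightarrow> real" and a b :: real
    have "(\<Sum>i=1..m. c i * (b * y i + a)) = b * (\<Sum>i=1..m. c i * y i) + a * (\<Sum>i=1..m. c i)"
      by (simp add: sum.distrib sum_distrib_left algebra_simps)
    then show "(\<Sum>i=1..m. c i * (b * y i + a)) = b * (\<Sum>i=1..m. c i * y i)" using s by simp
  qed
qed

context pmx begin

lemma lin_formula:
  assumes "0 < \<theta>2"
  shows "lin_est n c \<theta>1 \<theta>2 \<omega> = \<theta>1 * (\<Sum>i=1..n. c i) + \<theta>2 * ((\<Sum>i=1..n. c i) * pmax \<omega> 1 + Q (Tc n c) \<omega>)"
proof -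
  have "lin_est n c \<theta>1 \<theta>2 \<omega> = (\<Sum>i=1..n. c i * (\<theta>1 + \<theta>2 * pmax \<omega> i))"
    unfolding lin_est_def by (rule sum.cong) (simp_all add: pmax_affine assms)
  also have "\<dots> = \<theta>1 * (\<Sum>i=1..n. c i) + \<theta>2 * (\<Sum>i=1..n. c i * pmax \<omega> i)"
    by (simp add: sum.distrib sum_distrib_left algebra_simps)
  also have "(\<Sum>i=1..n. c i * pmax \<omega> i) = (\<Sum>i=1..Suc N. c i * pmax \<omega> i)"
    using n2 by simp
  also have "\<dots> = (\<Sum>i=1..Suc N. c i) * pmax \<omega> 1
          + (\<Sum>j<N. (\<Sum>i=j+2..Suc N. c i) * (pmax \<omega> (j+2) - pmax \<omega> (j+1)))"
    by (rule sum_decomp)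
  also have "\<dots> = (\<Sum>i=1..n. c i) * pmax \<omega> 1 + Q (Tc n c) \<omega>"
    using n2 by (simp add: Q_def Tc_def spacing_def)
  finally show ?thesis .
qed

lemma lin_zero: "(\<Sum>i=1..n. c i) = 0 \<Longrightarrow> 0 < \<theta>2 \<Longrightarrow> lin_est n c \<theta>1 \<theta>2 \<omega> = \<theta>2 * Q (Tc n c) \<omega>"
  using lin_formula[of \<theta>2 c \<theta>1 \<omega>] by simp

lemma E_lin:
  assumes "0 < \<theta>2"
  shows "(\<integral>\<omega>. lin_est n c \<theta>1 \<theta>2 \<omega> \<partial>P) = \<theta>1 * (\<Sum>i=1..n. c i)
     + \<theta>2 * ((\<Sum>i=1..n. c i) * (\<integral>\<omega>. pmax \<omega> 1 \<partial>P) + (\<Sum>j<N. Tc n c j * mu j))"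
proof -
  let ?s = "\<Sum>i=1..n. c i"
  have i1: "integrable P (\<lambda>\<omega>. pmax \<omega> 1)" using L2_int[OF pmax_L2 finP] n2 by simp
  have i2: "integrable P (Q (Tc n c))" using L2_int[OF Q_L2 finP] .
  have i1': "integrable P (\<lambda>\<omega>. ?s * pmax \<omega> 1)" using i1 by (rule integrable_mult_right)
  have i3: "integrable P (\<lambda>\<omega>. ?s * pmax \<omega> 1 + Q (Tc n c) \<omega>)"
    by (rule Bochner_Integration.integrable_add[OF i1' i2])
  have i4: "integrable P (\<lambda>\<omega>. \<theta>2 * (?s * pmax \<omega> 1 + Q (Tc n c) \<omega>))"
    using i3 by (rule integrable_mult_right)
  have ic: "integrable P (\<lambda>\<omega>. \<theta>1 * ?s)" by (rule finite_measure.integrable_const[OF finP])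
  have "(\<integral>\<omega>. lin_est n c \<theta>1 \<theta>2 \<omega> \<partial>P) = (\<integral>\<omega>. \<theta>1 * ?s + \<theta>2 * (?s * pmax \<omega> 1 + Q (Tc n c) \<omega>) \<partial>P)"
    by (rule Bochner_Integration.integral_cong[OF refl]) (rule lin_formula[OF assms])
  also have "\<dots> = (\<integral>\<omega>. \<theta>1 * ?s \<partial>P) + (\<integral>\<omega>. \<theta>2 * (?s * pmax \<omega> 1 + Q (Tc n c) \<omega>) \<partial>P)"
    by (rule Bochner_Integration.integral_add[OF ic i4])
  also have "(\<integral>\<omega>. \<theta>2 * (?s * pmax \<omega> 1 + Q (Tc n c) \<omega>) \<partial>P)
      = \<theta>2 * (\<integral>\<omega>. ?s * pmax \<omega> 1 + Q (Tc n c) \<omega> \<partial>P)"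
    by (rule integral_mult_right_zero)
  also have "(\<integral>\<omega>. ?s * pmax \<omega> 1 + Q (Tc n c) \<omega> \<partial>P) = (\<integral>\<omega>. ?s * pmax \<omega> 1 \<partial>P) + (\<integral>\<omega>. Q (Tc n c) \<omega> \<partial>P)"
    by (rule Bochner_Integration.integral_add[OF i1' i2])
  also have "(\<integral>\<omega>. ?s * pmax \<omega> 1 \<partial>P) = ?s * (\<integral>\<omega>. pmax \<omega> 1 \<partial>P)"
    by (rule integral_mult_right_zero)
  also have "(\<integral>\<omega>. \<theta>1 * ?s \<partial>P) = \<theta>1 * ?s" using int1 by simp
  also have "(\<integral>\<omega>. Q (Tc n c) \<omega> \<partial>P) = (\<Sum>j<N. Tc n c j * mu j)" by (rule EQ)
  finally show ?thesis .
qed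

lemma unbiased_iff: "unbiased_scale n M c \<longleftrightarrow> (\<Sum>i=1..n. c i) = 0 \<and> (\<Sum>j<N. Tc n c j * mu j) = 1"
proof
  assume u: "unbiased_scale n M c"
  let ?s = "\<Sum>i=1..n. c i" and ?E = "\<integral>\<omega>. pmax \<omega> 1 \<partial>P" and ?m = "\<Sum>j<N. Tc n c j * mu j"
  have u': "(\<integral>\<omega>. lin_est n c t1 1 \<omega> \<partial>P) = 1" for t1
    using u unfolding unbiased_scale_def by simp
  have a: "0 * ?s + 1 * (?s * ?E + ?m) = (1::real)"
    using u'[of 0] E_lin[of 1 c 0] by simp
  have b: "1 * ?s + 1 * (?s * ?E + ?m) = (1::real)"
    using u'[of 1] E_lin[of 1 c 1] by simp
  from a b show "?s = 0 \<and> ?m = 1" by simp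
next
  assume h: "(\<Sum>i=1..n. c i) = 0 \<and> (\<Sum>j<N. Tc n c j * mu j) = 1"
  show "unbiased_scale n M c" unfolding unbiased_scale_def
  proof (intro allI impI)
    fix t1 t2 :: real assume "0 < t2"
    from E_lin[OF this, of c t1] h show "(\<integral>\<omega>. lin_est n c t1 t2 \<omega> \<partial>P) = t2" by simp
  qed
qed

lemma est_var_formula:
  assumes s: "(\<Sum>i=1..n. c i) = 0" and th: "0 < \<theta>2"
  shows "est_var n M c \<theta>1 \<theta>2 = \<theta>2\<^sup>2 * BF N Sf (Tc n c) (Tc n c)"
proof -
  let ?t = "Tc n c"
  have E: "(\<integral>\<omega>. lin_est n c \<theta>1 \<theta>2 \<omega> \<partial>P) = \<theta>2 * (\<Sum>j<N. ?t j * mu j)"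
    using E_lin[OF th, of c \<theta>1] s by simp
  have "est_var n M c \<theta>1 \<theta>2 = (\<integral>\<omega>. \<theta>2\<^sup>2 * ((\<Sum>i<N. ?t i * Zc i \<omega>) * (\<Sum>j<N. ?t j * Zc j \<omega>)) \<partial>P)"
    unfolding est_var_def E
  proof (rule Bochner_Integration.integral_cong[OF refl])
    fix \<omega>
    show "(lin_est n c \<theta>1 \<theta>2 \<omega> - \<theta>2 * (\<Sum>j<N. ?t j * mu j))\<^sup>2
        = \<theta>2\<^sup>2 * ((\<Sum>i<N. ?t i * Zc i \<omega>) * (\<Sum>j<N. ?t j * Zc j \<omega>))"
    proof -
      have l: "lin_est n c \<theta>1 \<theta>2 \<omega> = \<theta>2 * Q ?t \<omega>" by (rule lin_zero[OF s th])
      have q: "(\<Sum>j<N. ?t j * Zc j \<omega>) = Q ?t \<omega> - (\<Sum>j<N. ?t j * mu j)" by (rule Qc)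
      show ?thesis unfolding l q by (simp add: power2_eq_square algebra_simps)
    qed
  qed
  also have "\<dots> = \<theta>2\<^sup>2 * BF N Sf ?t ?t"
    by (simp only: integral_mult_right_zero BS_int[of ?t ?t])
  finally show ?thesis .
qed

lemma est_mse_formula:
  assumes s: "(\<Sum>i=1..n. c i) = 0" and th: "0 < \<theta>2"
  shows "est_mse n M c \<theta>1 \<theta>2 = \<theta>2\<^sup>2 * (BF N Df (Tc n c) (Tc n c) - 2 * (\<Sum>j<N. Tc n c j * mu j) + 1)"
proof -
  let ?t = "Tc n c"
  have iQ: "integrable P (Q ?t)" using L2_int[OF Q_L2 finP] .
  have iQQ: "integrable P (\<lambda>\<omega>. Q ?t \<omega> * Q ?t \<omega>)" by (rule L2_mult_int[OF Q_L2 Q_L2])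
  have ic: "integrable P (\<lambda>\<omega>. 1::real)" by (rule finite_measure.integrable_const[OF finP])
  have "est_mse n M c \<theta>1 \<theta>2 = (\<integral>\<omega>. \<theta>2\<^sup>2 * (Q ?t \<omega> * Q ?t \<omega> - 2 * Q ?t \<omega> + 1) \<partial>P)"
    unfolding est_mse_def
  proof (rule Bochner_Integration.integral_cong[OF refl])
    fix \<omega>
    show "(lin_est n c \<theta>1 \<theta>2 \<omega> - \<theta>2)\<^sup>2 = \<theta>2\<^sup>2 * (Q ?t \<omega> * Q ?t \<omega> - 2 * Q ?t \<omega> + 1)"
    proof -
      have l: "lin_est n c \<theta>1 \<theta>2 \<omega> = \<theta>2 * Q ?t \<omega>" by (rule lin_zero[OF s th])
      show ?thesis unfolding l by (simp add: power2_eq_square algebra_simps)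
    qed
  qed
  also have "\<dots> = \<theta>2\<^sup>2 * (\<integral>\<omega>. Q ?t \<omega> * Q ?t \<omega> - 2 * Q ?t \<omega> + 1 \<partial>P)"
    by (simp only: integral_mult_right_zero)
  also have "(\<integral>\<omega>. Q ?t \<omega> * Q ?t \<omega> - 2 * Q ?t \<omega> + 1 \<partial>P)
      = (\<integral>\<omega>. Q ?t \<omega> * Q ?t \<omega> \<partial>P) - 2 * (\<integral>\<omega>. Q ?t \<omega> \<partial>P) + 1"
  proof -
    have i2: "integrable P (\<lambda>\<omega>. 2 * Q ?t \<omega>)" using iQ by (rule integrable_mult_right)
    have i3: "integrable P (\<lambda>\<omega>. Q ?t \<omega> * Q ?t \<omega> - 2 * Q ?t \<omega>)"
      by (rule Bochner_Integration.integrable_diff[OF iQQ i2])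
    have "(\<integral>\<omega>. Q ?t \<omega> * Q ?t \<omega> - 2 * Q ?t \<omega> + 1 \<partial>P)
        = (\<integral>\<omega>. Q ?t \<omega> * Q ?t \<omega> - 2 * Q ?t \<omega> \<partial>P) + (\<integral>\<omega>. 1 \<partial>P)"
      by (rule Bochner_Integration.integral_add[OF i3 ic])
    also have "(\<integral>\<omega>. Q ?t \<omega> * Q ?t \<omega> - 2 * Q ?t \<omega> \<partial>P) = (\<integral>\<omega>. Q ?t \<omega> * Q ?t \<omega> \<partial>P) - (\<integral>\<omega>. 2 * Q ?t \<omega> \<partial>P)"
      by (rule Bochner_Integration.integral_diff[OF iQQ i2])
    also have "(\<integral>\<omega>. 2 * Q ?t \<omega> \<partial>P) = 2 * (\<integral>\<omega>. Q ?t \<omega> \<partial>P)" by (rule integral_mult_right_zero)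
    also have "(\<integral>\<omega>. (1::real) \<partial>P) = 1" using int1 by simp
    finally show ?thesis .
  qed
  finally show ?thesis by (simp only: BD_int[of ?t ?t] EQ)
qed

end


lemma mat_apply_sum:
  fixes v :: "real vec"
  assumes v: "v \<in> carrier_vec k" and i: "i < k"
  shows "(mat k k f *\<^sub>v v) $ i = (\<Sum>j<k. f (i, j) * v $ j)"
proof -
  have "(mat k k f *\<^sub>v v) $ i = row (mat k k f) i \<bullet> v" using i by simp
  also have "\<dots> = (\<Sum>j\<in>{0..<k}. row (mat k k f) i $ j * v $ j)" using v by (simp add: scalar_prod_def)
  also have "\<dots> = (\<Sum>j<k. f (i, j) * v $ j)"
    by (rule sum.cong) (use i in \<open>auto simp: atLeast0LessThan\<close>)
  finally show ?thesis .
qed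

lemma sprod_sum: fixes u v :: "real vec" assumes "v \<in> carrier_vec k" shows "u \<bullet> v = (\<Sum>i<k. u $ i * v $ i)"
  using assms by (simp add: scalar_prod_def atLeast0LessThan)

lemma inv_from_ker:
  fixes A :: "real mat"
  assumes A: "A \<in> carrier_mat k k"
    and ker: "\<And>v. v \<in> carrier_vec k \<Longrightarrow> A *\<^sub>v v = 0\<^sub>v k \<Longrightarrow> v = 0\<^sub>v k"
  shows "invertible_mat A"
proof -
  have "Determinant.det A \<noteq> 0"
    unfolding det_0_iff_vec_prod_zero_field[OF A] using ker by blast
  from det_non_zero_imp_unit[OF A this, of "()"]
  have "\<exists>B\<in>carrier_mat k k. B * A = 1\<^sub>m k \<and> A * B = 1\<^sub>m k"
    by (simp add: Units_def ring_mat_def)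
  then obtain B where B: "B \<in> carrier_mat k k" "B * A = 1\<^sub>m k" "A * B = 1\<^sub>m k"
    by blast
  have i1: "inverts_mat A B" unfolding inverts_mat_def using A B(3) by simp
  have i2: "inverts_mat B A" unfolding inverts_mat_def using B(1,2) by simp
  have sq: "square_mat A" using A by simp
  show ?thesis unfolding invertible_mat_def using sq i1 i2 by blast
qed

lemma mat_inv_apply:
  fixes A :: "real mat"
  assumes A: "A \<in> carrier_mat k k" and inv: "invertible_mat A" and v: "v \<in> carrier_vec k"
  shows "mat_inv A *\<^sub>v v \<in> carrier_vec k" "A *\<^sub>v (mat_inv A *\<^sub>v v) = v"
proof -
  have "\<exists>B. inverts_mat A B \<and> inverts_mat B A" using inv unfolding invertible_mat_def by blast
  then have h: "inverts_mat A (mat_inv A) \<and> inverts_mat (mat_inv A) A"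
    unfolding mat_inv_def by (rule someI_ex)
  let ?B = "mat_inv A"
  have dA: "dim_row A = k" "dim_col A = k" using carrier_matD[OF A] by auto
  have AB0: "A * ?B = 1\<^sub>m (dim_row A)" using h unfolding inverts_mat_def by blast
  have AB: "A * ?B = 1\<^sub>m k" using AB0 unfolding dA(1) .
  have BA: "?B * A = 1\<^sub>m (dim_row ?B)" using h unfolding inverts_mat_def by blast
  have "dim_col (A * ?B) = dim_col (1\<^sub>m k :: real mat)" by (simp only: AB)
  then have c1: "dim_col ?B = k" by (simp only: index_mult_mat(3) index_one_mat(3))
  have "dim_col (?B * A) = dim_col (1\<^sub>m (dim_row ?B) :: real mat)" by (simp only: BA)
  then have c2: "dim_row ?B = k" by (simp only: index_mult_mat(3) index_one_mat(3) dA(2))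
  have B: "?B \<in> carrier_mat k k" by (rule carrier_matI[OF c2 c1])
  show "?B *\<^sub>v v \<in> carrier_vec k" by (rule mult_mat_vec_carrier[OF B v])
  have "A *\<^sub>v (?B *\<^sub>v v) = (A * ?B) *\<^sub>v v" by (rule assoc_mult_mat_vec[OF A B v, symmetric])
  also have "\<dots> = 1\<^sub>m k *\<^sub>v v" by (simp only: AB)
  also have "\<dots> = v" by (rule one_mult_mat_vec[OF v])
  finally show "A *\<^sub>v (?B *\<^sub>v v) = v" .
qed


lemma BF_cong: "(\<And>i. i < N' \<Longrightarrow> a i = a' i) \<Longrightarrow> (\<And>j. j < N' \<Longrightarrow> b j = b' j) \<Longrightarrow> BF N' K a b = BF N' K a' b'"
  unfolding BF_def by (intro sum.cong refl) simp_all

lemma BF_zero_left: "BF N' K (\<lambda>_. 0) b = 0"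
  by (simp add: BF_def)

context pmx begin

lemma Q_cong: "(\<And>j. j < N \<Longrightarrow> t j = t' j) \<Longrightarrow> Q t \<omega> = Q t' \<omega>"
  unfolding Q_def by (rule sum.cong) simp_all

lemma Q_scale: "Q (\<lambda>j. r * t j) \<omega> = r * Q t \<omega>"
  unfolding Q_def by (simp add: sum_distrib_left mult.assoc)

lemma Q_nonneg: "(\<And>j. j < N \<Longrightarrow> 0 \<le> t j) \<Longrightarrow> 0 \<le> Q t \<omega>"
  unfolding Q_def by (intro sum_nonneg mult_nonneg_nonneg) (simp_all add: Z_nonneg)

lemma m_carrier: "m_vec n M \<in> carrier_vec N" by (simp add: m_vec_def)
lemma m_index: "i < N \<Longrightarrow> m_vec n M $ i = mu i" by (simp add: m_vec_def mu_def)
lemma S_carrier: "S_mat n M \<in> carrier_mat N N" by (simp add: S_mat_def)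
lemma D_carrier: "D_mat n M \<in> carrier_mat N N" by (simp add: D_mat_def)

lemma S_apply: "v \<in> carrier_vec N \<Longrightarrow> i < N \<Longrightarrow> (S_mat n M *\<^sub>v v) $ i = (\<Sum>j<N. Sf i j * v $ j)"
  unfolding S_mat_def using mat_apply_sum[of v N i "\<lambda>(i,j). spacing_cov n M (Suc i) (Suc j)"]
  by (simp add: Sf_def)

lemma D_apply: "v \<in> carrier_vec N \<Longrightarrow> i < N \<Longrightarrow> (D_mat n M *\<^sub>v v) $ i = (\<Sum>j<N. Df i j * v $ j)"
  unfolding D_mat_def using mat_apply_sum[of v N i "\<lambda>(i,j). spacing_moment n M (Suc i) (Suc j)"]
  by (simp add: Df_def)

lemma S_inv: "invertible_mat (S_mat n M)"
proof (rule inv_from_ker[OF S_carrier])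
  fix v :: "real vec" assume v: "v \<in> carrier_vec N" and z: "S_mat n M *\<^sub>v v = 0\<^sub>v N"
  have "(\<Sum>j<N. Sf i j * v $ j) = 0" if i: "i < N" for i
  proof -
    have "(S_mat n M *\<^sub>v v) $ i = 0\<^sub>v N $ i" using z by simp
    then show ?thesis using S_apply[OF v i] i by simp
  qed
  then have "\<forall>j<N. v $ j = 0" by (rule kerS[of "\<lambda>j. v $ j"])
  then show "v = 0\<^sub>v N" using v by (intro eq_vecI) auto
qed

lemma D_inv: "invertible_mat (D_mat n M)"
proof (rule inv_from_ker[OF D_carrier])
  fix v :: "real vec" assume v: "v \<in> carrier_vec N" and z: "D_mat n M *\<^sub>v v = 0\<^sub>v N"
  have "(\<Sum>j<N. Df i j * v $ j) = 0" if i: "i < N" for i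
  proof -
    have "(D_mat n M *\<^sub>v v) $ i = 0\<^sub>v N $ i" using z by simp
    then show ?thesis using D_apply[OF v i] i by simp
  qed
  then have "\<forall>j<N. v $ j = 0" by (rule kerD[of "\<lambda>j. v $ j"])
  then show "v = 0\<^sub>v N" using v by (intro eq_vecI) auto
qed

definition xv :: "real vec" where "xv = mat_inv (S_mat n M) *\<^sub>v m_vec n M"
definition xf :: "nat \<Rightarrow> real" where "xf j = xv $ j"
definition beta :: real where "beta = (\<Sum>i<N. mu i * xf i)"
definition yv :: "real vec" where "yv = mat_inv (D_mat n M) *\<^sub>v m_vec n M"
definition yf :: "nat \<Rightarrow> real" where "yf j = yv $ j"
definition aa :: real where "aa = (\<Sum>i<N. mu i * yf i)"
definition ts :: "nat \<Rightarrow> real" where "ts j = (1 / beta) * xf j"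

lemma xv_c: "xv \<in> carrier_vec N"
  unfolding xv_def by (rule mat_inv_apply(1)[OF S_carrier S_inv m_carrier])

lemma xs: "i < N \<Longrightarrow> (\<Sum>j<N. Sf i j * xf j) = mu i"
proof -
  assume i: "i < N"
  have "S_mat n M *\<^sub>v xv = m_vec n M"
    unfolding xv_def by (rule mat_inv_apply(2)[OF S_carrier S_inv m_carrier])
  then have "(S_mat n M *\<^sub>v xv) $ i = m_vec n M $ i" by simp
  then show ?thesis using S_apply[OF xv_c i] m_index[OF i] by (simp add: xf_def)
qed

lemma yv_c: "yv \<in> carrier_vec N"
  unfolding yv_def by (rule mat_inv_apply(1)[OF D_carrier D_inv m_carrier])

lemma ys: "i < N \<Longrightarrow> (\<Sum>j<N. Df i j * yf j) = mu i"
proof -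
  assume i: "i < N"
  have "D_mat n M *\<^sub>v yv = m_vec n M"
    unfolding yv_def by (rule mat_inv_apply(2)[OF D_carrier D_inv m_carrier])
  then have "(D_mat n M *\<^sub>v yv) $ i = m_vec n M $ i" by simp
  then show ?thesis using D_apply[OF yv_c i] m_index[OF i] by (simp add: yf_def)
qed

lemma beta_vec: "m_vec n M \<bullet> (mat_inv (S_mat n M) *\<^sub>v m_vec n M) = beta"
proof -
  have "m_vec n M \<bullet> xv = (\<Sum>i<N. m_vec n M $ i * xv $ i)" by (rule sprod_sum[OF xv_c])
  also have "\<dots> = beta" unfolding beta_def xf_def by (rule sum.cong) (simp_all add: m_index)
  finally show ?thesis unfolding xv_def .
qed

lemma aa_vec: "m_vec n M \<bullet> (mat_inv (D_mat n M) *\<^sub>v m_vec n M) = aa"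
proof -
  have "m_vec n M \<bullet> yv = (\<Sum>i<N. m_vec n M $ i * yv $ i)" by (rule sprod_sum[OF yv_c])
  also have "\<dots> = aa" unfolding aa_def yf_def by (rule sum.cong) (simp_all add: m_index)
  finally show ?thesis unfolding yv_def .
qed

lemma BFx: "BF N Sf t xf = (\<Sum>i<N. t i * mu i)"
  by (rule BF_apply) (rule xs)

lemma BFy: "BF N Df t yf = (\<Sum>i<N. t i * mu i)"
  by (rule BF_apply) (rule ys)

lemma beta_pos: "0 < beta"
proof -
  have b: "beta = BF N Sf xf xf" unfolding BFx beta_def by (simp add: mult.commute)
  have nz: "\<not> (\<forall>j<N. xf j = 0)"
  proof
    assume z: "\<forall>j<N. xf j = 0"
    have "(\<Sum>j<N. Sf 0 j * xf j) = mu 0" using xs N_pos by simp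
    moreover have "(\<Sum>j<N. Sf 0 j * xf j) = 0" using z by simp
    ultimately show False using mu0_pos by simp
  qed
  have "beta \<noteq> 0" using BS_zero[of xf] nz b by auto
  moreover have "0 \<le> beta" using BS_nonneg[of xf] b by simp
  ultimately show ?thesis by simp
qed

lemma Sy: "i < N \<Longrightarrow> (\<Sum>j<N. Sf i j * yf j) = (1 - aa) * mu i"
proof -
  assume i: "i < N"
  have "(\<Sum>j<N. Df i j * yf j) = (\<Sum>j<N. Sf i j * yf j + mu i * (mu j * yf j))"
    by (rule sum.cong) (use Df_eq[OF i] in \<open>simp_all add: algebra_simps\<close>)
  also have "\<dots> = (\<Sum>j<N. Sf i j * yf j) + mu i * aa"
    by (simp add: sum.distrib sum_distrib_left aa_def)
  finally show ?thesis using ys[OF i] by (simp add: algebra_simps)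
qed

lemma yx: "j < N \<Longrightarrow> yf j = (1 - aa) * xf j"
proof -
  have "(\<Sum>j<N. Sf i j * (yf j - (1 - aa) * xf j)) = 0" if i: "i < N" for i
  proof -
    have "(\<Sum>j<N. Sf i j * (yf j - (1 - aa) * xf j)) = (\<Sum>j<N. Sf i j * yf j) - (1 - aa) * (\<Sum>j<N. Sf i j * xf j)"
      by (simp add: right_diff_distrib sum_subtractf sum_distrib_left mult.left_commute)
    also have "\<dots> = 0" using Sy[OF i] xs[OF i] by simp
    finally show ?thesis .
  qed
  then have "\<forall>j<N. yf j - (1 - aa) * xf j = 0" by (rule kerS)
  then show "j < N \<Longrightarrow> yf j = (1 - aa) * xf j" by simp
qed

lemma aa_beta: "aa = (1 - aa) * beta"
proof -
  have e: "(\<Sum>i<N. mu i * yf i) = (\<Sum>i<N. mu i * ((1 - aa) * xf i))"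
    by (rule sum.cong) (simp_all add: yx[simplified])
  have e2: "(\<Sum>i<N. mu i * ((1 - aa) * xf i)) = (1 - aa) * (\<Sum>i<N. mu i * xf i)"
    by (simp add: sum_distrib_left algebra_simps)
  have "aa = (\<Sum>i<N. mu i * yf i)" by (rule aa_def)
  also have "\<dots> = (1 - aa) * (\<Sum>i<N. mu i * xf i)" using e e2 by simp
  also have "(\<Sum>i<N. mu i * xf i) = beta" by (rule beta_def[symmetric])
  finally show ?thesis .
qed

lemma aa_val: "aa = beta / (1 + beta)"
proof -
  have "aa * (1 + beta) = beta" using aa_beta by (simp add: algebra_simps)
  moreover have "1 + beta \<noteq> 0" using beta_pos by simp
  ultimately show ?thesis by (simp add: field_simps)
qed

lemma aa_pos: "0 < aa" and aa_lt1: "aa < 1"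
  using beta_pos by (simp_all add: aa_val field_simps)

lemma yts: "j < N \<Longrightarrow> yf j = aa * ts j"
proof -
  assume j: "j < N"
  have "1 - aa = aa / beta" using aa_beta beta_pos by (simp add: field_simps)
  then show ?thesis using yx[OF j] by (simp add: ts_def)
qed

lemma ts_mu: "(\<Sum>j<N. ts j * mu j) = 1"
proof -
  have e1: "(\<Sum>j<N. ts j * mu j) = (\<Sum>j<N. (1 / beta) * (mu j * xf j))"
    by (rule sum.cong) (simp_all add: ts_def)
  have e2: "(\<Sum>j<N. (1 / beta) * (mu j * xf j)) = (1 / beta) * beta"
    by (simp only: sum_distrib_left[symmetric] beta_def)
  have e3: "(1 / beta) * beta = 1" using beta_pos by simp
  show ?thesis using e1 e2 e3 by linarith
qed

lemma BFts: "BF N Sf t ts = (1 / beta) * (\<Sum>i<N. t i * mu i)"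
proof -
  have "BF N Sf t ts = BF N Sf t (\<lambda>j. (1 / beta) * xf j)" unfolding ts_def ..
  also have "\<dots> = (1 / beta) * BF N Sf t xf" by (rule BF_scale_right)
  finally show ?thesis unfolding BFx .
qed

lemma key_var: assumes "(\<Sum>j<N. t j * mu j) = 1"
  shows "BF N Sf t t = BF N Sf (\<lambda>j. t j - ts j) (\<lambda>j. t j - ts j) + 1 / beta"
proof -
  have "BF N Sf (\<lambda>j. t j - ts j) (\<lambda>j. t j - ts j)
      = (BF N Sf t t - BF N Sf t ts) - (BF N Sf ts t - BF N Sf ts ts)"
    by (simp only: BF_minus_left BF_minus_right)
  also have "BF N Sf ts t = BF N Sf t ts" by (rule BF_sym) (rule Sf_sym)
  also have "BF N Sf t ts = 1 / beta" unfolding BFts assms by simp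
  also have "BF N Sf ts ts = 1 / beta" unfolding BFts ts_mu by simp
  finally show ?thesis by simp
qed

lemma BD_nonneg: "0 \<le> BF N Df d d"
  using BS_nonneg[of d] unfolding BD_eq by simp

lemma BD_zero: "BF N Df d d = 0 \<Longrightarrow> \<forall>j<N. d j = 0"
proof -
  assume z: "BF N Df d d = 0"
  have "BF N Sf d d + (\<Sum>i<N. d i * mu i)\<^sup>2 = 0" using z unfolding BD_eq by (simp add: power2_eq_square)
  moreover have "0 \<le> BF N Sf d d" by (rule BS_nonneg)
  moreover have "0 \<le> (\<Sum>i<N. d i * mu i)\<^sup>2" by simp
  ultimately have "BF N Sf d d = 0" by linarith
  then show ?thesis by (rule BS_zero)
qed

lemma key_mse: "BF N Df t t - 2 * (\<Sum>j<N. t j * mu j) + 1 = BF N Df (\<lambda>j. t j - yf j) (\<lambda>j. t j - yf j) + (1 - aa)"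
proof -
  have "BF N Df (\<lambda>j. t j - yf j) (\<lambda>j. t j - yf j)
      = (BF N Df t t - BF N Df t yf) - (BF N Df yf t - BF N Df yf yf)"
    by (simp only: BF_minus_left BF_minus_right)
  also have "BF N Df yf t = BF N Df t yf" by (rule BF_sym) (rule Df_sym)
  also have "BF N Df yf yf = aa" unfolding BFy aa_def by (simp add: mult.commute)
  finally show ?thesis unfolding BFy by simp
qed

end


context pmx begin

lemma Tc_star: "j < N \<Longrightarrow> Tc n (cof n g) j = g j"
  by (rule Tc_cof) simp

lemma unb_star: "unbiased_scale n M (cof n ts)"
proof -
  have "(\<Sum>j<N. Tc n (cof n ts) j * mu j) = (\<Sum>j<N. ts j * mu j)"
    by (rule sum.cong) (simp_all add: Tc_star[simplified])
  then show ?thesis unfolding unbiased_iff using cof_sum ts_mu by simp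
qed

lemma var_unb:
  assumes u: "unbiased_scale n M c" and th: "0 < \<theta>2"
  shows "est_var n M c \<theta>1 \<theta>2 = \<theta>2\<^sup>2 * (BF N Sf (\<lambda>j. Tc n c j - ts j) (\<lambda>j. Tc n c j - ts j) + 1 / beta)"
proof -
  have s: "(\<Sum>i=1..n. c i) = 0" and m1: "(\<Sum>j<N. Tc n c j * mu j) = 1"
    using u unfolding unbiased_iff by auto
  show ?thesis unfolding est_var_formula[OF s th] key_var[OF m1] ..
qed

lemma BF_star_zero: "BF N Sf (\<lambda>j. Tc n (cof n ts) j - ts j) (\<lambda>j. Tc n (cof n ts) j - ts j) = 0"
proof -
  have "BF N Sf (\<lambda>j. Tc n (cof n ts) j - ts j) (\<lambda>j. Tc n (cof n ts) j - ts j) = BF N Sf (\<lambda>_. 0) (\<lambda>j. Tc n (cof n ts) j - ts j)"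
    by (rule BF_cong) (simp_all add: Tc_star)
  then show ?thesis by (simp add: BF_zero_left)
qed

lemma BLUE_star: "is_BLUE n M (cof n ts)"
  unfolding is_BLUE_def
proof (intro conjI allI impI)
  show "unbiased_scale n M (cof n ts)" by (rule unb_star)
  fix c' \<theta>1 \<theta>2 :: _
  assume u': "unbiased_scale n M c'" and th: "0 < (\<theta>2::real)"
  have "est_var n M (cof n ts) \<theta>1 \<theta>2 = \<theta>2\<^sup>2 * (0 + 1 / beta)"
    unfolding var_unb[OF unb_star th] BF_star_zero ..
  also have "\<dots> \<le> \<theta>2\<^sup>2 * (BF N Sf (\<lambda>j. Tc n c' j - ts j) (\<lambda>j. Tc n c' j - ts j) + 1 / beta)"
    using BS_nonneg by (intro mult_left_mono) simp_all
  also have "\<dots> = est_var n M c' \<theta>1 \<theta>2" unfolding var_unb[OF u' th] ..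
  finally show "est_var n M (cof n ts) \<theta>1 \<theta>2 \<le> est_var n M c' \<theta>1 \<theta>2" .
qed

lemma BLUE_char:
  assumes b: "is_BLUE n M c"
  shows "(\<Sum>i=1..n. c i) = 0" "\<And>j. j < N \<Longrightarrow> Tc n c j = ts j"
proof -
  have one: "0 < (1::real)" by simp
  have u: "unbiased_scale n M c" using b unfolding is_BLUE_def by blast
  then show "(\<Sum>i=1..n. c i) = 0" unfolding unbiased_iff by blast
  have "est_var n M c 0 1 \<le> est_var n M (cof n ts) 0 1"
    using b unb_star unfolding is_BLUE_def by simp
  then have "1\<^sup>2 * (BF N Sf (\<lambda>j. Tc n c j - ts j) (\<lambda>j. Tc n c j - ts j) + 1 / beta) \<le> 1\<^sup>2 * (0 + 1 / beta)"
    unfolding var_unb[OF u one] var_unb[OF unb_star one] BF_star_zero .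
  then have "BF N Sf (\<lambda>j. Tc n c j - ts j) (\<lambda>j. Tc n c j - ts j) \<le> 0" by simp
  then have "BF N Sf (\<lambda>j. Tc n c j - ts j) (\<lambda>j. Tc n c j - ts j) = 0" using BS_nonneg by (simp add: order_antisym)
  then have "\<forall>j<N. Tc n c j - ts j = 0" by (rule BS_zero)
  then show "\<And>j. j < N \<Longrightarrow> Tc n c j = ts j" by simp
qed

lemma inv_star: "invariant_scale n (cof n yf)"
  unfolding invariant_iff by (rule cof_sum)

lemma mse_inv:
  assumes iv: "invariant_scale n d" and th: "0 < \<theta>2"
  shows "est_mse n M d \<theta>1 \<theta>2 = \<theta>2\<^sup>2 * (BF N Df (\<lambda>j. Tc n d j - yf j) (\<lambda>j. Tc n d j - yf j) + (1 - aa))"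
proof -
  have s: "(\<Sum>i=1..n. d i) = 0" using iv unfolding invariant_iff .
  show ?thesis unfolding est_mse_formula[OF s th] key_mse ..
qed

lemma BD_star_zero: "BF N Df (\<lambda>j. Tc n (cof n yf) j - yf j) (\<lambda>j. Tc n (cof n yf) j - yf j) = 0"
proof -
  have "BF N Df (\<lambda>j. Tc n (cof n yf) j - yf j) (\<lambda>j. Tc n (cof n yf) j - yf j) = BF N Df (\<lambda>_. 0) (\<lambda>j. Tc n (cof n yf) j - yf j)"
    by (rule BF_cong) (simp_all add: Tc_star)
  then show ?thesis by (simp add: BF_zero_left)
qed

lemma BLIE_star: "is_BLIE n M (cof n yf)"
  unfolding is_BLIE_def
proof (intro conjI allI impI)
  show "invariant_scale n (cof n yf)" by (rule inv_star)
  fix c' \<theta>1 \<theta>2 :: _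
  assume u': "invariant_scale n c'" and th: "0 < (\<theta>2::real)"
  have "est_mse n M (cof n yf) \<theta>1 \<theta>2 = \<theta>2\<^sup>2 * (0 + (1 - aa))"
    unfolding mse_inv[OF inv_star th] BD_star_zero ..
  also have "\<dots> \<le> \<theta>2\<^sup>2 * (BF N Df (\<lambda>j. Tc n c' j - yf j) (\<lambda>j. Tc n c' j - yf j) + (1 - aa))"
    using BD_nonneg by (intro mult_left_mono) simp_all
  also have "\<dots> = est_mse n M c' \<theta>1 \<theta>2" unfolding mse_inv[OF u' th] ..
  finally show "est_mse n M (cof n yf) \<theta>1 \<theta>2 \<le> est_mse n M c' \<theta>1 \<theta>2" .
qed

lemma BLIE_char:
  assumes b: "is_BLIE n M d"
  shows "(\<Sum>i=1..n. d i) = 0" "\<And>j. j < N \<Longrightarrow> Tc n d j = yf j"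
proof -
  have one: "0 < (1::real)" by simp
  have u: "invariant_scale n d" using b unfolding is_BLIE_def by blast
  then show "(\<Sum>i=1..n. d i) = 0" unfolding invariant_iff .
  have "est_mse n M d 0 1 \<le> est_mse n M (cof n yf) 0 1"
    using b inv_star unfolding is_BLIE_def by simp
  then have "1\<^sup>2 * (BF N Df (\<lambda>j. Tc n d j - yf j) (\<lambda>j. Tc n d j - yf j) + (1 - aa)) \<le> 1\<^sup>2 * (0 + (1 - aa))"
    unfolding mse_inv[OF u one] mse_inv[OF inv_star one] BD_star_zero .
  then have "BF N Df (\<lambda>j. Tc n d j - yf j) (\<lambda>j. Tc n d j - yf j) \<le> 0" by simp
  then have "BF N Df (\<lambda>j. Tc n d j - yf j) (\<lambda>j. Tc n d j - yf j) = 0" using BD_nonneg by (simp add: order_antisym)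
  then have "\<forall>j<N. Tc n d j - yf j = 0" by (rule BD_zero)
  then show "\<And>j. j < N \<Longrightarrow> Tc n d j = yf j" by simp
qed

lemma lin_BLUE: "is_BLUE n M c \<Longrightarrow> 0 < \<theta>2 \<Longrightarrow> lin_est n c \<theta>1 \<theta>2 \<omega> = \<theta>2 * Q ts \<omega>"
proof -
  assume b: "is_BLUE n M c" and th: "0 < \<theta>2"
  have "lin_est n c \<theta>1 \<theta>2 \<omega> = \<theta>2 * Q (Tc n c) \<omega>" by (rule lin_zero[OF BLUE_char(1)[OF b] th])
  also have "Q (Tc n c) \<omega> = Q ts \<omega>" by (rule Q_cong) (rule BLUE_char(2)[OF b])
  finally show ?thesis .
qed

lemma lin_BLIE: "is_BLIE n M d \<Longrightarrow> 0 < \<theta>2 \<Longrightarrow> lin_est n d \<theta>1 \<theta>2 \<omega> = \<theta>2 * (aa * Q ts \<omega>)"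
proof -
  assume b: "is_BLIE n M d" and th: "0 < \<theta>2"
  have "lin_est n d \<theta>1 \<theta>2 \<omega> = \<theta>2 * Q (Tc n d) \<omega>" by (rule lin_zero[OF BLIE_char(1)[OF b] th])
  also have "Q (Tc n d) \<omega> = Q (\<lambda>j. aa * ts j) \<omega>"
    by (rule Q_cong) (simp add: BLIE_char(2)[OF b] yts)
  also have "\<dots> = aa * Q ts \<omega>" by (rule Q_scale)
  finally show ?thesis .
qed

lemma ts_nonneg:
  assumes offd: "\<And>i j. i < N \<Longrightarrow> j < N \<Longrightarrow> i \<noteq> j \<Longrightarrow> Sf i j \<le> 0"
  shows "j < N \<Longrightarrow> 0 \<le> ts j"
proof -
  assume j: "j < N"
  have "\<forall>j<N. 0 \<le> xf j" by (rule Mmat[OF offd xs]) simp_all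
  then have "0 \<le> xf j" using j by simp
  then show ?thesis unfolding ts_def using beta_pos by simp
qed

lemma main:
  "let m = m_vec n M; S = S_mat n M; D = D_mat n M;
             a = m \<bullet> (mat_inv D *\<^sub>v m)
         in invertible_mat D \<and> invertible_mat S \<and> 0 < a \<and> a < 1 \<and>
            a = (m \<bullet> (mat_inv S *\<^sub>v m)) / (1 + m \<bullet> (mat_inv S *\<^sub>v m)) \<and>
            (\<exists>c. is_BLUE n M c) \<and> (\<exists>d. is_BLIE n M d) \<and>
            (\<forall>c d. is_BLUE n M c \<longrightarrow> is_BLIE n M d \<longrightarrow>
               (\<forall>\<theta>1 \<theta>2. \<theta>2 > 0 \<longrightarrow>
                  (AE \<omega> in pm_sample n M. lin_est n d \<theta>1 \<theta>2 \<omega> = a * lin_est n c \<theta>1 \<theta>2 \<omega>))) \<and>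
            ((n = 2 \<or> (\<forall>i j. 1 \<le> i \<longrightarrow> i \<le> n - 1 \<longrightarrow> 1 \<le> j \<longrightarrow> j \<le> n - 1 \<longrightarrow> i \<noteq> j \<longrightarrow>
                         spacing_cov n M i j \<le> 0)) \<longrightarrow>
             (\<forall>c d. is_BLUE n M c \<longrightarrow> is_BLIE n M d \<longrightarrow>
               (\<forall>\<theta>1 \<theta>2. \<theta>2 > 0 \<longrightarrow>
                  (AE \<omega> in pm_sample n M. lin_est n c \<theta>1 \<theta>2 \<omega> \<ge> 0 \<and> lin_est n d \<theta>1 \<theta>2 \<omega> \<ge> 0))))"
  unfolding Let_def aa_vec beta_vec
proof (intro conjI)
  show "invertible_mat (D_mat n M)" by (rule D_inv)
  show "invertible_mat (S_mat n M)" by (rule S_inv)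
  show "0 < aa" by (rule aa_pos)
  show "aa < 1" by (rule aa_lt1)
  show "aa = beta / (1 + beta)" by (rule aa_val)
  show "\<exists>c. is_BLUE n M c" using BLUE_star by blast
  show "\<exists>d. is_BLIE n M d" using BLIE_star by blast
  show "\<forall>c d. is_BLUE n M c \<longrightarrow> is_BLIE n M d \<longrightarrow>
        (\<forall>\<theta>1 \<theta>2. \<theta>2 > 0 \<longrightarrow> (AE \<omega> in pm_sample n M. lin_est n d \<theta>1 \<theta>2 \<omega> = aa * lin_est n c \<theta>1 \<theta>2 \<omega>))"
  proof (intro allI impI)
    fix c d \<theta>1 \<theta>2 :: _
    assume bc: "is_BLUE n M c" and bd: "is_BLIE n M d" and th: "0 < (\<theta>2::real)"
    show "AE \<omega> in pm_sample n M. lin_est n d \<theta>1 \<theta>2 \<omega> = aa * lin_est n c \<theta>1 \<theta>2 \<omega>"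
    proof (rule AE_I2)
      fix \<omega>
      show "lin_est n d \<theta>1 \<theta>2 \<omega> = aa * lin_est n c \<theta>1 \<theta>2 \<omega>"
        unfolding lin_BLUE[OF bc th] lin_BLIE[OF bd th] by simp
    qed
  qed
  show "(n = 2 \<or> (\<forall>i j. 1 \<le> i \<longrightarrow> i \<le> n - 1 \<longrightarrow> 1 \<le> j \<longrightarrow> j \<le> n - 1 \<longrightarrow> i \<noteq> j \<longrightarrow>
                         spacing_cov n M i j \<le> 0)) \<longrightarrow>
             (\<forall>c d. is_BLUE n M c \<longrightarrow> is_BLIE n M d \<longrightarrow>
               (\<forall>\<theta>1 \<theta>2. \<theta>2 > 0 \<longrightarrow>
                  (AE \<omega> in pm_sample n M. lin_est n c \<theta>1 \<theta>2 \<omega> \<ge> 0 \<and> lin_est n d \<theta>1 \<theta>2 \<omega> \<ge> 0)))"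
  proof (intro impI allI)
    fix c d \<theta>1 \<theta>2 :: _
    assume H: "n = 2 \<or> (\<forall>i j. 1 \<le> i \<longrightarrow> i \<le> n - 1 \<longrightarrow> 1 \<le> j \<longrightarrow> j \<le> n - 1 \<longrightarrow> i \<noteq> j \<longrightarrow>
                         spacing_cov n M i j \<le> 0)"
      and bc: "is_BLUE n M c" and bd: "is_BLIE n M d" and th: "0 < (\<theta>2::real)"
    have offd: "Sf i j \<le> 0" if i: "i < N" and j: "j < N" and ij: "i \<noteq> j" for i j
    proof (cases "n = 2")
      case True
      then have "i = 0" "j = 0" using i j by auto
      with ij show ?thesis by simp
    next
      case False
      then have H2: "\<forall>i j. 1 \<le> i \<longrightarrow> i \<le> n - 1 \<longrightarrow> 1 \<le> j \<longrightarrow> j \<le> n - 1 \<longrightarrow> i \<noteq> j \<longrightarrow>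
                         spacing_cov n M i j \<le> 0" using H by blast
      have "spacing_cov n M (Suc i) (Suc j) \<le> 0"
        using H2 i j ij by simp
      then show ?thesis by (simp add: Sf_def)
    qed
    have tsn: "0 \<le> ts j" if "j < N" for j by (rule ts_nonneg[OF offd that])
    have Qn: "0 \<le> Q ts \<omega>" for \<omega> by (rule Q_nonneg) (rule tsn)
    show "AE \<omega> in pm_sample n M. lin_est n c \<theta>1 \<theta>2 \<omega> \<ge> 0 \<and> lin_est n d \<theta>1 \<theta>2 \<omega> \<ge> 0"
    proof (rule AE_I2)
      fix \<omega>
      have "0 \<le> \<theta>2 * Q ts \<omega>" using th Qn[of \<omega>] by simp
      moreover have "0 \<le> \<theta>2 * (aa * Q ts \<omega>)" using th Qn[of \<omega>] aa_pos by simp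
      ultimately show "lin_est n c \<theta>1 \<theta>2 \<omega> \<ge> 0 \<and> lin_est n d \<theta>1 \<theta>2 \<omega> \<ge> 0"
        unfolding lin_BLUE[OF bc th] lin_BLIE[OF bd th] by simp
    qed
  qed
qed

end

theorem theorem4p1:
  fixes M :: "real measure" and n :: nat
  assumes F: "real_distribution M"
    and finite_var: "integrable M (\<lambda>x. x\<^sup>2)"
    and nondegenerate: "\<forall>c. measure M {c} \<noteq> 1"
    and n2: "n \<ge> 2"
  shows "let m = m_vec n M; S = S_mat n M; D = D_mat n M;
             a = m \<bullet> (mat_inv D *\<^sub>v m)
         in invertible_mat D \<and> invertible_mat S \<and> 0 < a \<and> a < 1 \<and>
            a = (m \<bullet> (mat_inv S *\<^sub>v m)) / (1 + m \<bullet> (mat_inv S *\<^sub>v m)) \<and>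
            (\<exists>c. is_BLUE n M c) \<and> (\<exists>d. is_BLIE n M d) \<and>
            (\<forall>c d. is_BLUE n M c \<longrightarrow> is_BLIE n M d \<longrightarrow>
               (\<forall>\<theta>1 \<theta>2. \<theta>2 > 0 \<longrightarrow>
                  (AE \<omega> in pm_sample n M. lin_est n d \<theta>1 \<theta>2 \<omega> = a * lin_est n c \<theta>1 \<theta>2 \<omega>))) \<and>
            ((n = 2 \<or> (\<forall>i j. 1 \<le> i \<longrightarrow> i \<le> n - 1 \<longrightarrow> 1 \<le> j \<longrightarrow> j \<le> n - 1 \<longrightarrow> i \<noteq> j \<longrightarrow>
                         spacing_cov n M i j \<le> 0)) \<longrightarrow>
             (\<forall>c d. is_BLUE n M c \<longrightarrow> is_BLIE n M d \<longrightarrow>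
               (\<forall>\<theta>1 \<theta>2. \<theta>2 > 0 \<longrightarrow>
                  (AE \<omega> in pm_sample n M. lin_est n c \<theta>1 \<theta>2 \<omega> \<ge> 0 \<and> lin_est n d \<theta>1 \<theta>2 \<omega> \<ge> 0))))"
proof -
  interpret pmx M n
    by (intro pmx.intro pmx_axioms.intro F finite_var nondegenerate n2)
  show ?thesis by (rule main)
qed

end
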